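(* Let $q\ge0$. With $\mathscr{B}^*(Y,X)=\int_0^T\langle Y_1,-\dot X+AX\rangle\,\mathrm{d}s+(Y_2,X(T))$, \[ \sup_{0\neq Y\in\mathcal{Y}_{k,q}\times H}\ \sup_{0\neq X\in\mathcal{X}_{k,q+1}}\frac{\mathscr{B}^*(Y,X)}{|Y|_{\mathcal{Y}_H}|X|_{\mathcal{X}_{k,q+1}}}=1 \quad\text{and}\quad \inf_{0\neq Y\in\mathcal{Y}_{k,q}\times H}\ \sup_{0\neq X\in\mathcal{X}_{k,q+1}}\frac{\mathscr{B}^*(Y,X)}{|Y|_{\mathcal{Y}_H}|X|_{\mathcal{X}_{k,q+1}}}=1 . \]
   Context: Let $V\hookrightarrow H\hookrightarrow V^*$ be a Gelfand triple of real separable Hilbert spaces, with $V$ densely embedded in $H$. Write $(\cdot,\cdot)$ for the inner product of $H$ and $\langle\cdot,\cdot\rangle$ for the duality. Let $A:V\to V^*$ be the operator associated with a symmetric, bounded, coercive bilinear form on $V$, with fractional powers defined as usual. For $\gamma\in\mathbb{R}$, $\dot H^\gamma=D(A^{\gamma/2})$ with norm $\|A^{\gamma/2}\cdot\|_H$, so $\dot H^1=V$ and $\dot H^{-1}=V^*$. Let $0=t_0<\dots<t_N=T$ and $I_i=[t_i,t_{i+1}]$. Define the semidiscrete spaces: - $\mathcal{Y}_{k,q}$: the set of $Y\in L^2((0,T);V)$ whose restriction to each $I_i$ is a polynomial in $t$ of degree $\le q$ with coefficients in $\dot H^1$; - $\mathcal{X}_{k,q+1}$: the set of $X\in L^2((0,T);V)\cap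 H^1((0,T);V^* )$ whose restriction to each $I_i$ is a polynomial in $t$ of degree $\le q+1$ with coefficients in $\dot H^1$. Define the norms: - $|Y|_{\mathcal{Y}_H}^2=\|Y_2\|_H^2+\int_0^T\|A^{1/2}Y_1\|_H^2\,\mathrm{d}s$ for $Y=(Y_1,Y_2)$; - $|X|_{\mathcal{X}_{k,q+1}}^2=\|X(0)\|_H^2+\sum_{i=0}^{N-1}\int_{I_i}\big(\|\dot X\|_{\dot H^{-1}}^2+\|\Pi_i^{(q)}X\|_{\dot H^1}^2\big)\,\mathrm{d}s$, where $\Pi_i^{(q)}$ is the $L^2(I_i)$-orthogonal projection onto polynomials in $t$ of degree $\le q$. *)

theory Defs
  imports "HOL-Analysis.Analysis"
begin

text \<open>
  The pivot space H is the type 'h (a real Hilbert space, separable = second countable).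
  A is the operator associated with a; we use the standard identities
    norm (A^(1/2) v) ^ 2 = a v v   (v in V = dot H^1),
    <Y, A X> = a Y X,
    norm (A^(-1/2) w) = sup over v in V, v nonzero, of (w,v) / sqrt (a v v)   (dot H^-1 norm),
  and, for w in V (a subset of H), the duality pairing with w equals the H inner product.
\<close>

definition gelfand_form :: "'h::{real_inner,complete_space} set \<Rightarrow> ('h \<Rightarrow> 'h \<Rightarrow> real)
    \<Rightarrow> ('h \<Rightarrow> 'h \<Rightarrow> real) \<Rightarrow> bool" where
  "gelfand_form Vs iV a \<longleftrightarrow>
     0 \<in> Vs \<and> (\<forall>u\<in>Vs. \<forall>v\<in>Vs. u + v \<in> Vs) \<and> (\<forall>r. \<forall>v\<in>Vs. r *\<^sub>R v \<in> Vs) \<and>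
     \<comment> \<open>iV is an inner product on Vs\<close>
     (\<forall>u\<in>Vs. \<forall>v\<in>Vs. iV u v = iV v u) \<and>
     (\<forall>u\<in>Vs. \<forall>v\<in>Vs. \<forall>w\<in>Vs. \<forall>r s. iV (r *\<^sub>R u + s *\<^sub>R v) w = r * iV u w + s * iV v w) \<and>
     (\<forall>v\<in>Vs. v \<noteq> 0 \<longrightarrow> iV v v > 0) \<and>
     \<comment> \<open>(Vs, iV) is complete\<close>
     (\<forall>f::nat\<Rightarrow>'h. (\<forall>n. f n \<in> Vs) \<longrightarrow>
          (\<forall>e::real>0. \<exists>M::nat. \<forall>m\<ge>M. \<forall>n\<ge>M. iV (f m - f n) (f m - f n) < e) \<longrightarrow>
          (\<exists>v\<in>Vs. \<forall>e::real>0. \<exists>M::nat. \<forall>n\<ge>M. iV (f n - v) (f n - v) < e)) \<and>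
     \<comment> \<open>(Vs, iV) is separable\<close>
     (\<exists>D. countable D \<and> D \<subseteq> Vs \<and>
          (\<forall>v\<in>Vs. \<forall>e>0. \<exists>d\<in>D. iV (v - d) (v - d) < e)) \<and>
     \<comment> \<open>continuous and dense embedding into H\<close>
     (\<exists>C. \<forall>v\<in>Vs. norm v \<le> C * sqrt (iV v v)) \<and>
     closure Vs = UNIV \<and>
     \<comment> \<open>a is a symmetric, bounded, coercive bilinear form on V\<close>
     (\<forall>u\<in>Vs. \<forall>v\<in>Vs. a u v = a v u) \<and>
     (\<forall>u\<in>Vs. \<forall>v\<in>Vs. \<forall>w\<in>Vs. \<forall>r s. a (r *\<^sub>R u + s *\<^sub>R v) w = r * a u w + s * a v w) \<and>
     (\<exists>M. \<forall>u\<in>Vs. \<forall>v\<in>Vs. \<bar>a u v\<bar> \<le> M * sqrt (iV u u) * sqrt (iV v v)) \<and>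
     (\<exists>\<alpha>>0. \<forall>v\<in>Vs. a v v \<ge> \<alpha> * iV v v)"

definition Hm1norm :: "'h::real_inner set \<Rightarrow> ('h \<Rightarrow> 'h \<Rightarrow> real) \<Rightarrow> 'h \<Rightarrow> real" where
  "Hm1norm Vs a w = Sup {inner w v / sqrt (a v v) | v. v \<in> Vs \<and> v \<noteq> 0}"

definition pev :: "nat \<Rightarrow> (nat \<Rightarrow> 'h::real_vector) \<Rightarrow> real \<Rightarrow> 'h" where
  "pev d c s = (\<Sum>j\<le>d. (s ^ j) *\<^sub>R c j)"

definition pder :: "nat \<Rightarrow> (nat \<Rightarrow> 'h::real_vector) \<Rightarrow> real \<Rightarrow> 'h" where
  "pder d c s = (\<Sum>j\<in>{1..d}. (real j * s ^ (j - 1)) *\<^sub>R c j)"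

definition proj_poly :: "nat \<Rightarrow> real \<Rightarrow> real \<Rightarrow> (real \<Rightarrow> 'h::real_inner) \<Rightarrow> (real \<Rightarrow> 'h)" where
  "proj_poly q lo hi f = (THE P. (\<exists>c. P = pev q c) \<and>
      (\<forall>j\<le>q. \<forall>h. integral {lo..hi} (\<lambda>s. s ^ j * inner (f s - P s) h) = 0))"

text \<open>Semidiscrete spaces, given by coefficient families: piece i (on [t i, t (i+1)], i < N)
  is the polynomial with coefficients y i 0, ..., y i d.\<close>
definition Ycoef :: "'h::real_vector set \<Rightarrow> nat \<Rightarrow> nat \<Rightarrow> (nat \<Rightarrow> nat \<Rightarrow> 'h) set" where
  "Ycoef Vs N q = {y. \<forall>i<N. \<forall>j\<le>q. y i j \<in> Vs}"

text \<open>X must lie in H^1(0,T;V^*): for piecewise polynomials this is continuity at the nodes.\<close>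
definition Xcoef :: "'h::real_vector set \<Rightarrow> nat \<Rightarrow> (nat \<Rightarrow> real) \<Rightarrow> nat \<Rightarrow> (nat \<Rightarrow> nat \<Rightarrow> 'h) set" where
  "Xcoef Vs N t q = {x. (\<forall>i<N. \<forall>j\<le>q+1. x i j \<in> Vs) \<and>
      (\<forall>i. Suc i < N \<longrightarrow> pev (q+1) (x i) (t (Suc i)) = pev (q+1) (x (Suc i)) (t (Suc i)))}"

definition Ynorm_sq :: "('h \<Rightarrow> 'h \<Rightarrow> real) \<Rightarrow> nat \<Rightarrow> (nat \<Rightarrow> real) \<Rightarrow> nat
    \<Rightarrow> (nat \<Rightarrow> nat \<Rightarrow> 'h::real_normed_vector) \<times> 'h \<Rightarrow> real" where
  "Ynorm_sq a N t q Y = (norm (snd Y))\<^sup>2 +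
     (\<Sum>i<N. integral {t i..t (Suc i)} (\<lambda>s. a (pev q (fst Y i) s) (pev q (fst Y i) s)))"

definition Xnorm_sq :: "'h set \<Rightarrow> ('h \<Rightarrow> 'h \<Rightarrow> real) \<Rightarrow> nat \<Rightarrow> (nat \<Rightarrow> real) \<Rightarrow> nat
    \<Rightarrow> (nat \<Rightarrow> nat \<Rightarrow> 'h::real_inner) \<Rightarrow> real" where
  "Xnorm_sq Vs a N t q x = (norm (pev (q+1) (x 0) (t 0)))\<^sup>2 +
     (\<Sum>i<N. integral {t i..t (Suc i)} (\<lambda>s.
         (Hm1norm Vs a (pder (q+1) (x i) s))\<^sup>2 +
         a (proj_poly q (t i) (t (Suc i)) (pev (q+1) (x i)) s)
           (proj_poly q (t i) (t (Suc i)) (pev (q+1) (x i)) s)))"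

definition Bstar :: "('h \<Rightarrow> 'h \<Rightarrow> real) \<Rightarrow> nat \<Rightarrow> (nat \<Rightarrow> real) \<Rightarrow> nat
    \<Rightarrow> (nat \<Rightarrow> nat \<Rightarrow> 'h::real_inner) \<times> 'h \<Rightarrow> (nat \<Rightarrow> nat \<Rightarrow> 'h) \<Rightarrow> real" where
  "Bstar a N t q Y x =
     (\<Sum>i<N. integral {t i..t (Suc i)} (\<lambda>s.
         inner (pev q (fst Y i) s) (- pder (q+1) (x i) s) + a (pev q (fst Y i) s) (pev (q+1) (x i) s)))
     + inner (snd Y) (pev (q+1) (x (N - 1)) (t N))"

end

theory Submission
  imports Defs "HOL-Computational_Algebra.Polynomial"
begin

lemma le_by_eps:
  fixes x y c :: real
  assumes "\<And>\<theta>. \<theta> > 0 \<Longrightarrow> x \<le> y + \<theta> * c" and "c \<ge> 0"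
  shows "x \<le> y"
proof (rule ccontr)
  assume "\<not> x \<le> y"
  then have g: "x - y > 0" by simp
  define \<theta> where "\<theta> = (x - y) / (c + 1)"
  have tp: "\<theta> > 0" using g assms(2) by (simp add: \<theta>_def)
  have "\<theta> * c < x - y"
  proof -
    have "\<theta> * c = (x - y) * (c / (c + 1))" by (simp add: \<theta>_def)
    also have "\<dots> < (x - y) * 1" using g assms(2) by (intro mult_strict_left_mono) auto
    finally show ?thesis by simp
  qed
  with assms(1)[OF tp] show False by simp
qed

lemma quad_zero:
  fixes \<beta> \<gamma> :: real
  assumes "\<And>t. 0 \<le> 2 * t * \<beta> + t^2 * \<gamma>"
  shows "\<beta> = 0"
proof (rule ccontr)
  assume nz: "\<beta> \<noteq> 0"
  define g where "g = \<bar>\<gamma>\<bar> + 1"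
  have gp: "g > 0" by (simp add: g_def)
  define t where "t = - \<beta> / g"
  have "2 * t * \<beta> + t^2 * \<gamma> = \<beta>^2 * (\<gamma> - 2 * g) / g^2"
    using gp by (simp add: t_def field_simps power2_eq_square)
  moreover have "\<gamma> - 2 * g < 0" by (simp add: g_def)
  moreover have "\<beta>^2 > 0" using nz by simp
  ultimately have "2 * t * \<beta> + t^2 * \<gamma> < 0" using gp
    by (simp add: divide_neg_pos mult_pos_neg)
  with assms[of t] show False by simp
qed

locale gfl =
  fixes Vs :: "'h::{real_inner,complete_space} set" and iV a :: "'h \<Rightarrow> 'h \<Rightarrow> real"
  assumes gf: "gelfand_form Vs iV a" and nz: "Vs \<noteq> {0}"
begin

lemmas gfs = gf[unfolded gelfand_form_def]
lemmas g_zero = gfs[THEN conjunct1]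
lemmas g_add = gfs[THEN conjunct2, THEN conjunct1]
lemmas g_scale = gfs[THEN conjunct2, THEN conjunct2, THEN conjunct1]
lemmas g_iVsym = gfs[THEN conjunct2, THEN conjunct2, THEN conjunct2, THEN conjunct1]
lemmas g_iVlin = gfs[THEN conjunct2, THEN conjunct2, THEN conjunct2, THEN conjunct2, THEN conjunct1]
lemmas g_iVpos = gfs[THEN conjunct2, THEN conjunct2, THEN conjunct2, THEN conjunct2, THEN conjunct2, THEN conjunct1]
lemmas g_comp = gfs[THEN conjunct2, THEN conjunct2, THEN conjunct2, THEN conjunct2, THEN conjunct2, THEN conjunct2, THEN conjunct1]
lemmas g_sep = gfs[THEN conjunct2, THEN conjunct2, THEN conjunct2, THEN conjunct2, THEN conjunct2, THEN conjunct2, THEN conjunct2, THEN conjunct1]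
lemmas g_emb = gfs[THEN conjunct2, THEN conjunct2, THEN conjunct2, THEN conjunct2, THEN conjunct2, THEN conjunct2, THEN conjunct2, THEN conjunct2, THEN conjunct1]
lemmas g_dense = gfs[THEN conjunct2, THEN conjunct2, THEN conjunct2, THEN conjunct2, THEN conjunct2, THEN conjunct2, THEN conjunct2, THEN conjunct2, THEN conjunct2, THEN conjunct1]
lemmas g_asym = gfs[THEN conjunct2, THEN conjunct2, THEN conjunct2, THEN conjunct2, THEN conjunct2, THEN conjunct2, THEN conjunct2, THEN conjunct2, THEN conjunct2, THEN conjunct2, THEN conjunct1]
lemmas g_alin = gfs[THEN conjunct2, THEN conjunct2, THEN conjunct2, THEN conjunct2, THEN conjunct2, THEN conjunct2, THEN conjunct2, THEN conjunct2, THEN conjunct2, THEN conjunct2, THEN conjunct2, THEN conjunct1]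
lemmas g_abd = gfs[THEN conjunct2, THEN conjunct2, THEN conjunct2, THEN conjunct2, THEN conjunct2, THEN conjunct2, THEN conjunct2, THEN conjunct2, THEN conjunct2, THEN conjunct2, THEN conjunct2, THEN conjunct2, THEN conjunct1]
lemmas g_coerc = gfs[THEN conjunct2, THEN conjunct2, THEN conjunct2, THEN conjunct2, THEN conjunct2, THEN conjunct2, THEN conjunct2, THEN conjunct2, THEN conjunct2, THEN conjunct2, THEN conjunct2, THEN conjunct2, THEN conjunct2]

lemma V0[simp]: "0 \<in> Vs" using g_zero .
lemma Vadd[simp]: "u \<in> Vs \<Longrightarrow> v \<in> Vs \<Longrightarrow> u + v \<in> Vs" using g_add by blast
lemma Vscale[simp]: "v \<in> Vs \<Longrightarrow> r *\<^sub>R v \<in> Vs" using g_scale by blast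
lemma Vneg[simp]: "v \<in> Vs \<Longrightarrow> - v \<in> Vs" using Vscale[of v "-1"] by simp
lemma Vdiff[simp]: "u \<in> Vs \<Longrightarrow> v \<in> Vs \<Longrightarrow> u - v \<in> Vs" using Vadd[of u "-v"] by simp
lemma Vsum[simp]: "(\<And>j. j \<in> A \<Longrightarrow> f j \<in> Vs) \<Longrightarrow> sum f A \<in> Vs"
  by (induction A rule: infinite_finite_induct) auto

lemma a_sym: "u \<in> Vs \<Longrightarrow> v \<in> Vs \<Longrightarrow> a u v = a v u" using g_asym by blast
lemma a_lin: "u \<in> Vs \<Longrightarrow> v \<in> Vs \<Longrightarrow> w \<in> Vs \<Longrightarrow> a (r *\<^sub>R u + s *\<^sub>R v) w = r * a u w + s * a v w"
  using g_alin by blast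
lemma a_add1[simp]: "u \<in> Vs \<Longrightarrow> v \<in> Vs \<Longrightarrow> w \<in> Vs \<Longrightarrow> a (u + v) w = a u w + a v w"
  using a_lin[of u v w 1 1] by simp
lemma a_scale1[simp]: "u \<in> Vs \<Longrightarrow> w \<in> Vs \<Longrightarrow> a (r *\<^sub>R u) w = r * a u w"
  using a_lin[of u 0 w r 0] by simp
lemma a_zero1[simp]: "w \<in> Vs \<Longrightarrow> a 0 w = 0"
  using a_scale1[of 0 w 0] by simp
lemma a_neg1[simp]: "u \<in> Vs \<Longrightarrow> w \<in> Vs \<Longrightarrow> a (- u) w = - a u w"
  using a_scale1[of u w "-1"] by simp
lemma a_diff1[simp]: "u \<in> Vs \<Longrightarrow> v \<in> Vs \<Longrightarrow> w \<in> Vs \<Longrightarrow> a (u - v) w = a u w - a v w"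
  using a_add1[of u "-v" w] by simp
lemma a_add2[simp]: "u \<in> Vs \<Longrightarrow> v \<in> Vs \<Longrightarrow> w \<in> Vs \<Longrightarrow> a w (u + v) = a w u + a w v"
  by (simp add: a_sym[of w "u+v"] a_sym[of w u] a_sym[of w v])
lemma a_scale2[simp]: "u \<in> Vs \<Longrightarrow> w \<in> Vs \<Longrightarrow> a w (r *\<^sub>R u) = r * a w u"
  by (simp add: a_sym[of w "r *\<^sub>R u"] a_sym[of w u])
lemma a_zero2[simp]: "w \<in> Vs \<Longrightarrow> a w 0 = 0"
  by (simp add: a_sym[of w 0])
lemma a_neg2[simp]: "u \<in> Vs \<Longrightarrow> w \<in> Vs \<Longrightarrow> a w (- u) = - a w u"
  using a_scale2[of u w "-1"] by simp
lemma a_diff2[simp]: "u \<in> Vs \<Longrightarrow> v \<in> Vs \<Longrightarrow> w \<in> Vs \<Longrightarrow> a w (u - v) = a w u - a w v"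
  using a_add2[of u "-v" w] by simp
lemma a_sum1: "(\<And>j. j \<in> A \<Longrightarrow> f j \<in> Vs) \<Longrightarrow> w \<in> Vs \<Longrightarrow> a (sum f A) w = (\<Sum>j\<in>A. a (f j) w)"
  by (induction A rule: infinite_finite_induct) auto
lemma a_sum2: "(\<And>j. j \<in> A \<Longrightarrow> f j \<in> Vs) \<Longrightarrow> w \<in> Vs \<Longrightarrow> a w (sum f A) = (\<Sum>j\<in>A. a w (f j))"
  by (induction A rule: infinite_finite_induct) auto

lemma iV_lin: "u \<in> Vs \<Longrightarrow> v \<in> Vs \<Longrightarrow> w \<in> Vs \<Longrightarrow> iV (r *\<^sub>R u + s *\<^sub>R v) w = r * iV u w + s * iV v w"
  using g_iVlin by blast
lemma iV_sym: "u \<in> Vs \<Longrightarrow> v \<in> Vs \<Longrightarrow> iV u v = iV v u" using g_iVsym by blast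
lemma iV_00: "iV 0 0 = 0" using iV_lin[of 0 0 0 0 0] by simp
lemma iV_pos: "v \<in> Vs \<Longrightarrow> v \<noteq> 0 \<Longrightarrow> iV v v > 0" using g_iVpos by blast
lemma iV_nn: "v \<in> Vs \<Longrightarrow> iV v v \<ge> 0" using iV_pos[of v] iV_00 by (cases "v = 0") auto

lemma coerc: "\<exists>\<alpha>>0. \<forall>v\<in>Vs. a v v \<ge> \<alpha> * iV v v" using g_coerc by simp
lemma a_nn[simp]: "v \<in> Vs \<Longrightarrow> a v v \<ge> 0"
  using coerc iV_nn by (meson dual_order.trans mult_nonneg_nonneg order_less_imp_le)
lemma a_pos: "v \<in> Vs \<Longrightarrow> v \<noteq> 0 \<Longrightarrow> a v v > 0"
proof -
  assume v: "v \<in> Vs" "v \<noteq> 0"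
  obtain \<alpha> where "\<alpha> > 0" "\<forall>v\<in>Vs. a v v \<ge> \<alpha> * iV v v" using coerc by blast
  with iV_pos[OF v] v show ?thesis by (meson dual_order.strict_trans1 mult_pos_pos)
qed
lemma a_eq0: "v \<in> Vs \<Longrightarrow> a v v = 0 \<longleftrightarrow> v = 0"
  by (metis a_pos a_zero1 less_irrefl V0)

lemma a_bound: "\<exists>B>0. \<forall>v\<in>Vs. a v v \<le> B * iV v v"
proof -
  obtain M where M: "\<forall>u\<in>Vs. \<forall>v\<in>Vs. \<bar>a u v\<bar> \<le> M * sqrt (iV u u) * sqrt (iV v v)"
    using g_abd by blast
  have "\<forall>v\<in>Vs. a v v \<le> (\<bar>M\<bar>+1) * iV v v"
  proof
    fix v assume v: "v \<in> Vs"
    have "a v v \<le> M * sqrt (iV v v) * sqrt (iV v v)" using M v by fastforce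
    also have "\<dots> = M * iV v v" using iV_nn[OF v] by (simp add: mult.assoc)
    also have "\<dots> \<le> (\<bar>M\<bar>+1) * iV v v" using iV_nn[OF v] by (intro mult_right_mono) auto
    finally show "a v v \<le> (\<bar>M\<bar>+1) * iV v v" .
  qed
  then show ?thesis by (intro exI[of _ "\<bar>M\<bar>+1"]) auto
qed

lemma emb: "\<exists>Cd>0. \<forall>v\<in>Vs. (norm v)^2 \<le> Cd * a v v"
proof -
  obtain C where C: "\<forall>v\<in>Vs. norm v \<le> C * sqrt (iV v v)"
    using g_emb by blast
  obtain \<alpha> where al: "\<alpha> > 0" "\<forall>v\<in>Vs. a v v \<ge> \<alpha> * iV v v" using coerc by blast
  have "\<forall>v\<in>Vs. (norm v)^2 \<le> (C^2/\<alpha> + 1) * a v v"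
  proof
    fix v assume v: "v \<in> Vs"
    have "(norm v)^2 \<le> (C * sqrt (iV v v))^2"
      using C v by (intro power_mono) auto
    also have "\<dots> = C^2 * iV v v" using iV_nn[OF v] by (simp add: power_mult_distrib)
    also have "\<dots> \<le> C^2 * (a v v / \<alpha>)" using al v
      by (intro mult_left_mono) (auto simp: field_simps)
    also have "\<dots> = (C^2/\<alpha>) * a v v" by simp
    also have "\<dots> \<le> (C^2/\<alpha> + 1) * a v v" using a_nn[OF v] by (intro mult_right_mono) auto
    finally show "(norm v)^2 \<le> (C^2/\<alpha> + 1) * a v v" .
  qed
  moreover have "C^2/\<alpha> + 1 > 0" using al by (simp add: add_nonneg_pos)
  ultimately show ?thesis by blast
qed

lemma a_expand: "u \<in> Vs \<Longrightarrow> v \<in> Vs \<Longrightarrow>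
   a (r *\<^sub>R u + s *\<^sub>R v) (r *\<^sub>R u + s *\<^sub>R v) = r^2 * a u u + 2 * r * s * a u v + s^2 * a v v"
proof -
  assume u: "u \<in> Vs" and v: "v \<in> Vs"
  have "a (r *\<^sub>R u + s *\<^sub>R v) (r *\<^sub>R u + s *\<^sub>R v)
      = r * a u (r *\<^sub>R u + s *\<^sub>R v) + s * a v (r *\<^sub>R u + s *\<^sub>R v)"
    using u v by (intro a_lin) auto
  also have "a u (r *\<^sub>R u + s *\<^sub>R v) = r * a u u + s * a u v" using u v by simp
  also have "a v (r *\<^sub>R u + s *\<^sub>R v) = r * a u v + s * a v v" using u v a_sym[OF v u] by simp
  finally show ?thesis by (simp add: power2_eq_square algebra_simps)
qed

lemma a_CS: "u \<in> Vs \<Longrightarrow> v \<in> Vs \<Longrightarrow> (a u v)^2 \<le> a u u * a v v"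
proof -
  assume u: "u \<in> Vs" and v: "v \<in> Vs"
  show ?thesis
  proof (cases "v = 0")
    case True then show ?thesis using u by simp
  next
    case False
    have p: "a v v > 0" using a_pos[OF v False] .
    define t where "t = a u v / a v v"
    have "0 \<le> a (1 *\<^sub>R u + (-t) *\<^sub>R v) (1 *\<^sub>R u + (-t) *\<^sub>R v)" using u v by (intro a_nn) auto
    also have "\<dots> = a u u - 2 * t * a u v + t^2 * a v v"
      using a_expand[OF u v, of 1 "-t"] by simp
    also have "\<dots> = a u u - (a u v)^2 / a v v"
      using p by (simp add: t_def power2_eq_square field_simps)
    finally show ?thesis using p by (simp add: field_simps)
  qed
qed

lemma a_amgm: "u \<in> Vs \<Longrightarrow> v \<in> Vs \<Longrightarrow> \<theta> > 0 \<Longrightarrow> 2 * \<bar>a u v\<bar> \<le> \<theta> * a u u + a v v / \<theta>"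
proof -
  assume u: "u \<in> Vs" and v: "v \<in> Vs" and th: "\<theta> > 0"
  have h: "2 * s * a u v \<le> \<theta> * a u u + a v v / \<theta>" if s: "s\<in>{-1,1::real}" for s
  proof -
    have "0 \<le> a (\<theta> *\<^sub>R u + (- s) *\<^sub>R v) (\<theta> *\<^sub>R u + (- s) *\<^sub>R v)" using u v by (intro a_nn) auto
    also have "\<dots> = \<theta>^2 * a u u - 2 * \<theta> * s * a u v + s^2 * a v v"
      using a_expand[OF u v, of \<theta> "-s"] by simp
    finally have pr: "2 * \<theta> * s * a u v \<le> \<theta>^2 * a u u + a v v" using s by auto
    have e: "\<theta> * (\<theta> * a u u + a v v / \<theta>) = \<theta>^2 * a u u + a v v"
      using th by (simp add: field_simps power2_eq_square)
    have e2: "\<theta> * (2 * s * a u v) = 2 * \<theta> * s * a u v" by simp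
    have "\<theta> * (2 * s * a u v) \<le> \<theta> * (\<theta> * a u u + a v v / \<theta>)"
      using pr e e2 by linarith
    then show "2 * s * a u v \<le> \<theta> * a u u + a v v / \<theta>" using th by simp
  qed
  show ?thesis using h[of 1] h[of "-1"] by (cases "a u v \<ge> 0") auto
qed

lemma complete_a:
  assumes f: "\<And>n. f n \<in> Vs" and cau: "\<And>e. e>0 \<Longrightarrow> \<exists>M::nat. \<forall>m\<ge>M. \<forall>n\<ge>M. a (f m - f n) (f m - f n) < e"
  shows "\<exists>v\<in>Vs. \<forall>e>0. \<exists>M::nat. \<forall>n\<ge>M. a (f n - v) (f n - v) < e"
proof -
  obtain \<alpha> where al: "\<alpha> > 0" "\<And>v. v\<in>Vs \<Longrightarrow> a v v \<ge> \<alpha> * iV v v" using coerc by blast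
  obtain B where B: "B > 0" "\<And>v. v\<in>Vs \<Longrightarrow> a v v \<le> B * iV v v" using a_bound by blast
  have c1: "\<exists>M::nat. \<forall>m\<ge>M. \<forall>n\<ge>M. iV (f m - f n) (f m - f n) < e" if e: "e > 0" for e
  proof -
    have ae: "\<alpha> * e > 0" using al(1) e by simp
    obtain M where M: "\<And>m n. m \<ge> M \<Longrightarrow> n \<ge> M \<Longrightarrow> a (f m - f n) (f m - f n) < \<alpha> * e"
      using cau[OF ae] by blast
    have "iV (f m - f n) (f m - f n) < e" if mn: "m \<ge> M" "n \<ge> M" for m n
    proof -
      have l1: "a (f m - f n) (f m - f n) < \<alpha> * e" using M[OF mn] .
      have fm: "f m - f n \<in> Vs" using f by simp
      have "\<alpha> * iV (f m - f n) (f m - f n) \<le> a (f m - f n) (f m - f n)" using al(2)[OF fm] .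
      then have "\<alpha> * iV (f m - f n) (f m - f n) < \<alpha> * e" using l1 by linarith
      then show ?thesis using al(1) by simp
    qed
    then show ?thesis by blast
  qed
  have ex: "\<exists>v\<in>Vs. \<forall>e::real>0. \<exists>M::nat. \<forall>n\<ge>M. iV (f n - v) (f n - v) < e"
    using mp[OF mp[OF spec[OF g_comp, of f]]] f c1 by blast
  then obtain v where v: "v \<in> Vs" "\<And>e. e>0 \<Longrightarrow> \<exists>M::nat. \<forall>n\<ge>M. iV (f n - v) (f n - v) < e"
    by blast
  have "\<exists>M::nat. \<forall>n\<ge>M. a (f n - v) (f n - v) < e" if e: "e > 0" for e
  proof -
    have eB: "e / B > 0" using e B(1) by simp
    obtain M where M: "\<And>n. n \<ge> M \<Longrightarrow> iV (f n - v) (f n - v) < e / B" using v(2)[OF eB] by blast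
    have "a (f n - v) (f n - v) < e" if n: "n \<ge> M" for n
    proof -
      have "iV (f n - v) (f n - v) < e / B" using M[OF n] .
      then have i1: "B * iV (f n - v) (f n - v) < e" using B(1) by (simp add: field_simps)
      have "f n - v \<in> Vs" using f v(1) by simp
      then have "a (f n - v) (f n - v) \<le> B * iV (f n - v) (f n - v)" using B(2) by blast
      then show ?thesis using i1 by linarith
    qed
    then show ?thesis by blast
  qed
  with v(1) show ?thesis by blast
qed

end

context gfl begin

lemma proj:
  assumes RV: "R \<subseteq> Vs" and R0: "0 \<in> R"
    and Radd: "\<And>u v. u\<in>R \<Longrightarrow> v\<in>R \<Longrightarrow> u + v \<in> R"
    and Rsc: "\<And>r v. v\<in>R \<Longrightarrow> r *\<^sub>R v \<in> R"
    and ladd: "\<And>u v. u\<in>Vs \<Longrightarrow> v\<in>Vs \<Longrightarrow> l (u + v) = l u + l v"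
    and lsc: "\<And>r v. v\<in>Vs \<Longrightarrow> l (r *\<^sub>R v) = r * l v"
    and lbd: "\<And>v. v\<in>Vs \<Longrightarrow> (l v)^2 \<le> C * a v v" and C: "C \<ge> 0"
  shows "\<exists>p\<in>Vs. (\<forall>r\<in>R. a p r = l r) \<and> (\<forall>e>0. \<exists>r\<in>R. a (r - p) (r - p) < e)"
proof -
  define J where "J v = a v v - 2 * l v" for v
  have ldiff: "l (u - v) = l u - l v" if "u \<in> Vs" "v \<in> Vs" for u v
    using ladd[of u "(-1) *\<^sub>R v"] lsc[of v "-1"] that by simp
  have labs: "2 * \<bar>l v\<bar> \<le> \<theta> + C * a v v / \<theta>" if v: "v \<in> Vs" and th: "\<theta> > 0" for v \<theta>
  proof -
    have "0 \<le> (\<bar>l v\<bar> - \<theta>)^2" by simp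
    then have "2 * \<theta> * \<bar>l v\<bar> \<le> \<theta>^2 + (l v)^2" by (simp add: power2_eq_square algebra_simps)
    also have "\<dots> \<le> \<theta>^2 + C * a v v" using lbd[OF v] by simp
    finally have pr: "2 * \<theta> * \<bar>l v\<bar> \<le> \<theta>^2 + C * a v v" .
    have e: "\<theta> * (\<theta> + C * a v v / \<theta>) = \<theta>^2 + C * a v v"
      using th by (simp add: field_simps power2_eq_square)
    have "\<theta> * (2 * \<bar>l v\<bar>) \<le> \<theta> * (\<theta> + C * a v v / \<theta>)"
      using pr e by (simp add: mult.assoc mult.left_commute)
    then show ?thesis using th by simp
  qed
  have Jlb: "J v \<ge> -(C + 1)" if v: "v \<in> Vs" for v
  proof -
    have "2 * \<bar>l v\<bar> \<le> (C + 1) + C * a v v / (C + 1)" using labs[OF v, of "C+1"] C by simp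
    also have "C * a v v / (C + 1) \<le> a v v"
      using C a_nn[OF v] by (simp add: field_simps mult_right_mono)
    finally show ?thesis unfolding J_def by linarith
  qed
  define m where "m = Inf (J ` R)"
  have bdd: "bdd_below (J ` R)" using Jlb RV by (intro bdd_belowI[of _ "-(C+1)"]) auto
  have mle: "m \<le> J r" if "r \<in> R" for r
    unfolding m_def using bdd that by (simp add: cInf_lower)
  have "\<exists>r\<in>R. J r < m + 1 / Suc n" for n
  proof -
    have "Inf (J ` R) < m + 1 / Suc n" by (simp add: m_def)
    from cInf_lessD[OF _ this] R0 show ?thesis by blast
  qed
  then obtain rs where rs: "\<And>n. rs n \<in> R" "\<And>n. J (rs n) < m + 1 / Suc n" by metis
  have rsV: "rs n \<in> Vs" for n using rs(1) RV by blast
  have para: "a (x - y) (x - y) = 2 * J x + 2 * J y - 4 * J ((1/2) *\<^sub>R (x + y))"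
    if x: "x \<in> Vs" and y: "y \<in> Vs" for x y
  proof -
    have e1: "a (x - y) (x - y) = a x x - 2 * a x y + a y y"
      using a_expand[OF x y, of 1 "-1"] by simp
    have e2: "a ((1/2) *\<^sub>R (x + y)) ((1/2) *\<^sub>R (x + y)) = (a x x + 2 * a x y + a y y) / 4"
      using a_expand[OF x y, of "1/2" "1/2"] by (simp add: scaleR_add_right power2_eq_square)
    have e3: "l ((1/2) *\<^sub>R (x + y)) = (l x + l y) / 2"
      using lsc[of "x+y" "1/2"] ladd[OF x y] x y by simp
    show ?thesis unfolding J_def using e1 e2 e3 by simp
  qed
  have cau_R: "a (x - y) (x - y) \<le> 2 * (J x - m) + 2 * (J y - m)" if "x \<in> R" "y \<in> R" for x y
  proof -
    have "(1/2) *\<^sub>R (x + y) \<in> R" using that Radd Rsc by blast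
    then have "m \<le> J ((1/2) *\<^sub>R (x + y))" by (rule mle)
    moreover have "x \<in> Vs" "y \<in> Vs" using that RV by auto
    ultimately show ?thesis using para by fastforce
  qed
  have cauchy: "\<exists>M::nat. \<forall>i\<ge>M. \<forall>j\<ge>M. a (rs i - rs j) (rs i - rs j) < e" if e: "e > 0" for e
  proof -
    obtain M :: nat where M: "4 / e < Suc M"
      using reals_Archimedean2[of "4/e"] by (meson less_Suc_eq of_nat_less_iff order.strict_trans) 
    have "a (rs i - rs j) (rs i - rs j) < e" if "i \<ge> M" "j \<ge> M" for i j
    proof -
      have i: "1 / real (Suc i) \<le> 1 / Suc M" using that by (simp add: frac_le)
      have j: "1 / real (Suc j) \<le> 1 / Suc M" using that by (simp add: frac_le)
      have "4 / Suc M < e" using M e by (simp add: field_simps)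
      moreover have "a (rs i - rs j) (rs i - rs j) < 2 / Suc i + 2 / Suc j"
        using cau_R[OF rs(1) rs(1), of i j] rs(2)[of i] rs(2)[of j] by simp
      ultimately show ?thesis using i j by simp
    qed
    then show ?thesis by blast
  qed
  obtain p where p: "p \<in> Vs" "\<And>e. e > 0 \<Longrightarrow> \<exists>M::nat. \<forall>n\<ge>M. a (rs n - p) (rs n - p) < e"
    using complete_a[of rs, OF rsV cauchy] by blast
  have Jclose: "\<bar>J u - J w\<bar> \<le> \<theta> * (a u u + 1) + a (u - w) (u - w) * (1 + (1 + C) / \<theta>)"
    if u: "u \<in> Vs" and w: "w \<in> Vs" and th: "\<theta> > 0" for u w \<theta>
  proof -
    define e where "e = u - w"
    have ev: "e \<in> Vs" using u w by (simp add: e_def)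
    have we: "w = u - e" by (simp add: e_def)
    have aw: "a w w = a u u - 2 * a u e + a e e"
      using a_expand[OF u ev, of 1 "-1"] unfolding we by simp
    have lw: "l w = l u - l e" unfolding we using ldiff[OF u ev] .
    have d: "J u - J w = 2 * a u e - a e e - 2 * l e" unfolding J_def using aw lw by simp
    have b1: "2 * \<bar>a u e\<bar> \<le> \<theta> * a u u + a e e / \<theta>" using a_amgm[OF u ev th] .
    have b2: "2 * \<bar>l e\<bar> \<le> \<theta> + C * a e e / \<theta>" using labs[OF ev th] .
    have ee: "a e e * (1 + (1 + C) / \<theta>) = a e e + a e e / \<theta> + C * a e e / \<theta>"
      using th by (simp add: field_simps)
    have nn: "a e e \<ge> 0" using ev by simp
    have "\<bar>J u - J w\<bar> \<le> 2 * \<bar>a u e\<bar> + a e e + 2 * \<bar>l e\<bar>"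
      unfolding d using nn by linarith
    also have "\<dots> \<le> \<theta> * (a u u + 1) + a e e * (1 + (1 + C) / \<theta>)"
      using b1 b2 ee by (simp add: algebra_simps)
    finally show ?thesis by (simp add: e_def)
  qed
  have eta: "\<theta>^2 / (\<theta> + 1 + C) > 0 \<and> \<theta>^2 / (\<theta> + 1 + C) * (1 + (1 + C) / \<theta>) = \<theta>"
    if th: "\<theta> > 0" for \<theta>
  proof -
    have q: "\<theta> + 1 + C > 0" using th C by simp
    have "1 + (1 + C) / \<theta> = (\<theta> + 1 + C) / \<theta>" using th by (simp add: field_simps)
    then have "\<theta>^2 / (\<theta> + 1 + C) * (1 + (1 + C) / \<theta>) = \<theta>^2 / \<theta>"
      using q by simp
    also have "\<dots> = \<theta>" using th by (simp add: power2_eq_square)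
    finally show ?thesis using q th by simp
  qed
  have anegsym: "a (x - y) (x - y) = a (y - x) (y - x)" if "x \<in> Vs" "y \<in> Vs" for x y
  proof -
    have "y - x = (-1) *\<^sub>R (x - y)" by simp
    then show ?thesis using that by simp
  qed
  have Jp: "J p \<le> m"
  proof (rule le_by_eps[of _ _ "a p p + 3"])
    fix \<theta> :: real assume th: "\<theta> > 0"
    define \<eta> where "\<eta> = \<theta>^2 / (\<theta> + 1 + C)"
    have et: "\<eta> > 0" "\<eta> * (1 + (1 + C) / \<theta>) = \<theta>" using eta[OF th] by (auto simp: \<eta>_def)
    obtain M where M: "\<forall>n\<ge>M. a (rs n - p) (rs n - p) < \<eta>" using p(2)[OF et(1)] by blast
    obtain n0 :: nat where n0: "1 / \<theta> < n0" using reals_Archimedean2 by blast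
    define n where "n = max M n0"
    have "n \<ge> M" by (simp add: n_def)
    then have "a (rs n - p) (rs n - p) < \<eta>" using M by blast
    then have an: "a (p - rs n) (p - rs n) \<le> \<eta>" using anegsym[OF p(1) rsV, of n] by simp
    have "real n0 \<le> real n" by (simp add: n_def)
    then have "1 / \<theta> < Suc n" using n0 by simp
    then have sn: "1 / real (Suc n) < \<theta>" using th by (simp add: field_simps)
    have "\<bar>J p - J (rs n)\<bar> \<le> \<theta> * (a p p + 1) + a (p - rs n) (p - rs n) * (1 + (1 + C) / \<theta>)"
      using Jclose[OF p(1) rsV th] .
    also have "\<dots> \<le> \<theta> * (a p p + 1) + \<eta> * (1 + (1 + C) / \<theta>)"
      using an th C by (intro add_left_mono mult_right_mono) (auto simp: add_pos_nonneg)
    finally have "J p \<le> J (rs n) + \<theta> * (a p p + 1) + \<theta>" using et by linarith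
    then show "J p \<le> m + \<theta> * (a p p + 3)" using rs(2)[of n] sn by (simp add: algebra_simps)
  next
    show "a p p + 3 \<ge> 0" using a_nn[OF p(1)] by simp
  qed
  have Jpr: "m \<le> J (p + t *\<^sub>R r)" if r: "r \<in> R" for r t
  proof -
    have rV: "r \<in> Vs" using r RV by blast
    define u where "u = p + t *\<^sub>R r"
    have uV: "u \<in> Vs" using p(1) rV by (simp add: u_def)
    show ?thesis unfolding u_def[symmetric]
    proof (rule le_by_eps[of _ _ "a u u + 2"])
      fix \<theta> :: real assume th: "\<theta> > 0"
      define \<eta> where "\<eta> = \<theta>^2 / (\<theta> + 1 + C)"
      have et: "\<eta> > 0" "\<eta> * (1 + (1 + C) / \<theta>) = \<theta>" using eta[OF th] by (auto simp: \<eta>_def)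
      obtain M where M: "\<forall>n\<ge>M. a (rs n - p) (rs n - p) < \<eta>" using p(2)[OF et(1)] by blast
      define w where "w = rs M + t *\<^sub>R r"
      have wR: "w \<in> R" using rs(1) r Radd Rsc by (simp add: w_def)
      have wV: "w \<in> Vs" using wR RV by blast
      have uw: "u - w = p - rs M" by (simp add: u_def w_def)
      have "a (rs M - p) (rs M - p) < \<eta>" using M by blast
      then have an: "a (u - w) (u - w) \<le> \<eta>" using anegsym[OF p(1) rsV, of M] uw by simp
      have "\<bar>J u - J w\<bar> \<le> \<theta> * (a u u + 1) + a (u - w) (u - w) * (1 + (1 + C) / \<theta>)"
        using Jclose[OF uV wV th] .
      also have "\<dots> \<le> \<theta> * (a u u + 1) + \<eta> * (1 + (1 + C) / \<theta>)"
        using an th C by (intro add_left_mono mult_right_mono) (auto simp: add_pos_nonneg)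
      finally have "J w \<le> J u + \<theta> * (a u u + 1) + \<theta>" using et by linarith
      then show "m \<le> J u + \<theta> * (a u u + 2)" using mle[OF wR] by (simp add: algebra_simps)
    next
      show "a u u + 2 \<ge> 0" using a_nn[OF uV] by simp
    qed
  qed
  have orth: "a p r = l r" if r: "r \<in> R" for r
  proof -
    have rV: "r \<in> Vs" using r RV by blast
    have "0 \<le> 2 * t * (a p r - l r) + t^2 * a r r" for t
    proof -
      have "J (p + t *\<^sub>R r) = a p p + 2 * t * a p r + t^2 * a r r - 2 * l p - 2 * t * l r"
        unfolding J_def using a_expand[OF p(1) rV, of 1 t] ladd[of p "t *\<^sub>R r"] lsc[OF rV, of t] p(1) rV
        by simp
      moreover have "J p = a p p - 2 * l p" by (simp add: J_def)
      ultimately show ?thesis using Jpr[OF r, of t] Jp by (simp add: algebra_simps)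
    qed
    then have "a p r - l r = 0" by (rule quad_zero)
    then show ?thesis by simp
  qed
  have approx: "\<exists>r\<in>R. a (r - p) (r - p) < e" if "e > 0" for e
    using p(2)[OF that] rs(1) by blast
  show ?thesis using p(1) orth approx by blast
qed

lemma riesz: "\<exists>u\<in>Vs. \<forall>v\<in>Vs. a u v = inner f v"
proof -
  obtain Cd where Cd: "Cd > 0" "\<And>v. v\<in>Vs \<Longrightarrow> (norm v)^2 \<le> Cd * a v v" using emb by blast
  have bd: "(inner f v)^2 \<le> ((norm f)^2 * Cd) * a v v" if v: "v \<in> Vs" for v
  proof -
    have "\<bar>inner f v\<bar>^2 \<le> (norm f * norm v)^2"
      using Cauchy_Schwarz_ineq2[of f v] by (intro power_mono) auto
    then have "(inner f v)^2 \<le> (norm f * norm v)^2" by simp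
    also have "\<dots> = (norm f)^2 * (norm v)^2" by (simp add: power_mult_distrib)
    also have "\<dots> \<le> (norm f)^2 * (Cd * a v v)" using Cd(2)[OF v] by (intro mult_left_mono) auto
    finally show ?thesis by (simp add: mult.assoc)
  qed
  have C0: "(norm f)^2 * Cd \<ge> 0" using Cd(1) by simp
  have "\<exists>p\<in>Vs. (\<forall>r\<in>Vs. a p r = inner f r) \<and> (\<forall>e>0. \<exists>r\<in>Vs. a (r - p) (r - p) < e)"
  proof (rule proj[of Vs "inner f", OF _ _ _ _ _ _ bd C0])
    show "Vs \<subseteq> Vs" by simp
    show "0 \<in> Vs" by simp
    show "\<And>u v. u \<in> Vs \<Longrightarrow> v \<in> Vs \<Longrightarrow> u + v \<in> Vs" by simp
    show "\<And>r v. v \<in> Vs \<Longrightarrow> r *\<^sub>R v \<in> Vs" by simp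
    show "\<And>u v. inner f (u + v) = inner f u + inner f v" by (simp add: inner_add_right)
    show "\<And>r v. inner f (r *\<^sub>R v) = r * inner f v" by simp
  qed
  then show ?thesis by blast
qed

definition Kop :: "'h \<Rightarrow> 'h" where
  "Kop f = (SOME u. u \<in> Vs \<and> (\<forall>v\<in>Vs. a u v = inner f v))"

lemma K_spec: "Kop f \<in> Vs \<and> (\<forall>v\<in>Vs. a (Kop f) v = inner f v)"
proof -
  have "\<exists>u. u \<in> Vs \<and> (\<forall>v\<in>Vs. a u v = inner f v)" using riesz[of f] by blast
  from someI_ex[OF this] show ?thesis unfolding Kop_def .
qed

lemma K_in[simp]: "Kop f \<in> Vs" using K_spec by blast
lemma K_eq: "v \<in> Vs \<Longrightarrow> a (Kop f) v = inner f v" using K_spec by blast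

lemma a_unique: "u \<in> Vs \<Longrightarrow> u' \<in> Vs \<Longrightarrow> (\<And>v. v \<in> Vs \<Longrightarrow> a u v = a u' v) \<Longrightarrow> u = u'"
proof -
  assume u: "u \<in> Vs" and u': "u' \<in> Vs" and h: "\<And>v. v \<in> Vs \<Longrightarrow> a u v = a u' v"
  have d: "u - u' \<in> Vs" using u u' by simp
  have "a (u - u') (u - u') = 0" using h[OF d] u u' d by simp
  then show ?thesis using a_eq0[OF d] by simp
qed

lemma K_add: "Kop (f + g) = Kop f + Kop g"
  by (rule a_unique) (auto simp: K_eq inner_add_left)
lemma K_scale: "Kop (r *\<^sub>R f) = r *\<^sub>R Kop f"
  by (rule a_unique) (auto simp: K_eq)
lemma K_zero: "Kop 0 = 0" using K_scale[of 0 0] by simp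
lemma K_diff: "Kop (f - g) = Kop f - Kop g"
  using K_add[of f "-g"] K_scale[of "-1" g] by simp
lemma K_sum: "Kop (sum f A) = (\<Sum>j\<in>A. Kop (f j))"
  by (induction A rule: infinite_finite_induct) (auto simp: K_zero K_add)
lemma K_sym: "u \<in> Vs \<Longrightarrow> v \<in> Vs \<Longrightarrow> a (Kop u) v = a u (Kop v)"
  by (simp add: K_eq a_sym[of u "Kop v"] inner_commute)
lemma K_inj: "u \<in> Vs \<Longrightarrow> Kop u = 0 \<Longrightarrow> u = 0"
  using K_eq[of u u] by simp

end

lemma pev_deriv: "((pev d c) has_vector_derivative pder d c s) (at s within S)"
proof -
  have dj: "((\<lambda>s. (s ^ j) *\<^sub>R c j) has_vector_derivative (real j * s ^ (j - 1)) *\<^sub>R c j) (at s within S)" for j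
  proof -
    have "((\<lambda>s. (s ^ j) *\<^sub>R c j) has_vector_derivative s ^ j *\<^sub>R 0 + (real j * s ^ (j - Suc 0)) *\<^sub>R c j) (at s within S)"
      by (rule has_vector_derivative_scaleR[OF DERIV_pow has_vector_derivative_const])
    then show ?thesis by simp
  qed
  have "((\<lambda>s. \<Sum>j\<le>d. (s ^ j) *\<^sub>R c j) has_vector_derivative (\<Sum>j\<le>d. (real j * s ^ (j - 1)) *\<^sub>R c j)) (at s within S)"
    by (intro has_vector_derivative_sum dj)
  moreover have "(\<Sum>j\<le>d. (real j * s ^ (j - 1)) *\<^sub>R c j) = pder d c s"
  proof -
    have "{..d} = insert 0 {1..d}" by auto
    then show ?thesis unfolding pder_def by simp
  qed
  ultimately show ?thesis unfolding pev_def by simp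
qed

lemma pev_cont[continuous_intros]: "continuous_on S (pev d (c :: nat \<Rightarrow> 'h::real_normed_vector))"
  unfolding pev_def by (intro continuous_intros)

lemma pder_cont[continuous_intros]: "continuous_on S (pder d (c :: nat \<Rightarrow> 'h::real_normed_vector))"
  unfolding pder_def by (intro continuous_intros)

lemma pder_as_pev: "pder (Suc d) c s = pev d (\<lambda>j. real (Suc j) *\<^sub>R c (Suc j)) s"
proof -
  have "pder (Suc d) c s = (\<Sum>j\<in>Suc ` {..d}. (real j * s ^ (j - 1)) *\<^sub>R c j)"
    unfolding pder_def image_Suc_atMost by simp
  also have "\<dots> = (\<Sum>j\<le>d. (real (Suc j) * s ^ j) *\<^sub>R c (Suc j))"
    by (subst sum.reindex) auto
  also have "\<dots> = pev d (\<lambda>j. real (Suc j) *\<^sub>R c (Suc j)) s"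
    unfolding pev_def by (simp add: scaleR_scaleR mult.commute)
  finally show ?thesis .
qed

lemma pev_Suc: "pev (Suc d) c s = pev d c s + (s ^ Suc d) *\<^sub>R c (Suc d)"
  unfolding pev_def by simp

lemma inner_pev_left: "inner (pev d c s) h = (\<Sum>j\<le>d. s ^ j * inner (c j) h)"
  unfolding pev_def by (simp add: inner_sum_left)

lemma inner_pev_right: "inner h (pev d c s) = (\<Sum>j\<le>d. s ^ j * inner h (c j))"
  unfolding pev_def by (simp add: inner_sum_right)

definition spoly :: "nat \<Rightarrow> (nat \<Rightarrow> real) \<Rightarrow> real poly" where
  "spoly d b = (\<Sum>j\<le>d. monom (b j) j)"

lemma poly_spoly: "poly (spoly d b) s = (\<Sum>j\<le>d. b j * s ^ j)"
  unfolding spoly_def by (simp add: poly_sum poly_monom)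

lemma coeff_spoly: "j \<le> d \<Longrightarrow> coeff (spoly d b) j = b j"
  unfolding spoly_def by (simp add: coeff_sum coeff_monom)

lemma degree_spoly: "degree (spoly d b) \<le> d"
  unfolding spoly_def by (intro degree_sum_le) (auto intro: order.trans[OF degree_monom_le])

lemma scalar_zero_interval:
  fixes lo hi :: real
  assumes "lo < hi" and "\<And>s. s \<in> {lo..hi} \<Longrightarrow> (\<Sum>j\<le>d. b j * s ^ j) = 0" and "j \<le> d"
  shows "b j = 0"
proof -
  have "spoly d b = 0"
  proof (rule ccontr)
    assume "spoly d b \<noteq> 0"
    then have "finite {x. poly (spoly d b) x = 0}" by (rule poly_roots_finite)
    moreover have "{lo..hi} \<subseteq> {x. poly (spoly d b) x = 0}" using assms(2) by (auto simp: poly_spoly)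
    ultimately have "finite {lo..hi}" by (rule finite_subset[rotated])
    then show False using infinite_Icc[OF assms(1)] by simp
  qed
  then show ?thesis using coeff_spoly[OF assms(3), of b] by simp
qed

lemma pev_zero_interval:
  fixes c :: "nat \<Rightarrow> 'h::real_inner"
  assumes "lo < hi" and "\<And>s. s \<in> {lo..hi} \<Longrightarrow> pev d c s = 0" and "j \<le> d"
  shows "c j = 0"
proof -
  have "inner (c j) (c j) = 0"
  proof (rule scalar_zero_interval[OF assms(1) _ assms(3), of "\<lambda>k. inner (c k) (c j)"])
    fix s assume "s \<in> {lo..hi}"
    then have "inner (pev d c s) (c j) = 0" using assms(2) by simp
    then show "(\<Sum>k\<le>d. inner (c k) (c j) * s ^ k) = 0" by (simp add: inner_pev_left mult.commute)
  qed
  then show ?thesis by simp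
qed

lemma ftc_norm:
  fixes x :: "nat \<Rightarrow> 'h::real_inner"
  assumes "lo \<le> hi"
  shows "((\<lambda>s. inner (pder d x s) (pev d x s)) has_integral
          ((norm (pev d x hi))^2 - (norm (pev d x lo))^2) / 2) {lo..hi}"
proof -
  have der: "((\<lambda>s. inner (pev d x s) (pev d x s)) has_vector_derivative 2 * inner (pder d x s) (pev d x s))
      (at s within {lo..hi})" for s
  proof -
    have D: "(pev d x has_derivative (\<lambda>h. h *\<^sub>R pder d x s)) (at s within {lo..hi})"
      using pev_deriv[of d x s "{lo..hi}"] by (simp add: has_vector_derivative_def)
    have "((\<lambda>s. inner (pev d x s) (pev d x s)) has_derivative
        (\<lambda>h. inner (pev d x s) (h *\<^sub>R pder d x s) + inner (h *\<^sub>R pder d x s) (pev d x s))) (at s within {lo..hi})"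
      by (rule has_derivative_inner[OF D D])
    moreover have "(\<lambda>h. inner (pev d x s) (h *\<^sub>R pder d x s) + inner (h *\<^sub>R pder d x s) (pev d x s))
        = (\<lambda>h. h *\<^sub>R (2 * inner (pder d x s) (pev d x s)))"
      by (auto simp: inner_commute)
    ultimately show ?thesis by (simp add: has_vector_derivative_def)
  qed
  have "((\<lambda>s. 2 * inner (pder d x s) (pev d x s)) has_integral
      (inner (pev d x hi) (pev d x hi) - inner (pev d x lo) (pev d x lo))) {lo..hi}"
    by (rule fundamental_theorem_of_calculus[OF assms]) (use der in auto)
  from has_integral_cmul[OF this, of "1/2"]
  show ?thesis by (simp add: power2_norm_eq_inner diff_divide_distrib)
qed

lemma poly_cont[continuous_intros]: "continuous_on S (\<lambda>x. poly p (f x))" if "continuous_on S f" for f :: "real \<Rightarrow> real"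
proof -
  have "(\<lambda>x. poly p (f x)) = (\<lambda>x. \<Sum>i\<le>degree p. coeff p i * f x ^ i)" by (simp add: poly_altdef)
  then show ?thesis using that by (simp add: continuous_intros)
qed

definition ipl :: "real \<Rightarrow> real \<Rightarrow> real poly \<Rightarrow> real poly \<Rightarrow> real" where
  "ipl lo hi f g = integral {lo..hi} (\<lambda>s. poly f s * poly g s)"

lemma ipl_int: "(\<lambda>s. poly f s * poly g s) integrable_on {lo..hi::real}"
  by (intro integrable_continuous_interval continuous_intros)

lemma ipl_add: "ipl lo hi (f + g) u = ipl lo hi f u + ipl lo hi g u"
  unfolding ipl_def using ipl_int[of f u lo hi] ipl_int[of g u lo hi]
  by (simp add: distrib_right integral_add)
lemma ipl_diff: "ipl lo hi (f - g) u = ipl lo hi f u - ipl lo hi g u"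
  unfolding ipl_def using ipl_int[of f u lo hi] ipl_int[of g u lo hi]
  by (simp add: left_diff_distrib integral_diff)
lemma ipl_smult: "ipl lo hi (smult c f) u = c * ipl lo hi f u"
  unfolding ipl_def by (simp add: mult.assoc)
lemma ipl_sym: "ipl lo hi f g = ipl lo hi g f"
  unfolding ipl_def by (simp add: mult.commute)
lemma ipl_add2: "ipl lo hi u (f + g) = ipl lo hi u f + ipl lo hi u g"
  by (simp only: ipl_sym[of lo hi u] ipl_add)
lemma ipl_diff2: "ipl lo hi u (f - g) = ipl lo hi u f - ipl lo hi u g"
  by (simp only: ipl_sym[of lo hi u] ipl_diff)
lemma ipl_smult2: "ipl lo hi u (smult c f) = c * ipl lo hi u f"
  by (simp only: ipl_sym[of lo hi u] ipl_smult)

lemma ipl_pos: assumes "lo < hi" "f \<noteq> 0" shows "ipl lo hi f f > 0"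
proof -
  have nn: "ipl lo hi f f \<ge> 0" unfolding ipl_def
    by (intro integral_nonneg ipl_int) auto
  have "ipl lo hi f f \<noteq> 0"
  proof
    assume "ipl lo hi f f = 0"
    then have "\<forall>s\<in>{lo..hi}. poly f s * poly f s = 0"
      unfolding ipl_def using assms(1)
      by (subst (asm) integral_eq_0_iff) (auto intro!: continuous_intros)
    then have "{lo..hi} \<subseteq> {x. poly f x = 0}" by auto
    moreover have "finite {x. poly f x = 0}" using poly_roots_finite[OF assms(2)] .
    ultimately show False using infinite_Icc[OF assms(1)] finite_subset by blast
  qed
  with nn show ?thesis by simp
qed

lemma ortho_claim:
  fixes lo hi :: real assumes lh: "lo < hi"
  shows "\<exists>r. degree r \<le> n \<and> (\<forall>u. degree u \<le> n \<longrightarrow> ipl lo hi (f - r) u = 0)"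
proof (induction n arbitrary: f)
  case 0
  define r where "r = [: ipl lo hi f 1 / (hi - lo) :]"
  have r1: "ipl lo hi r 1 = ipl lo hi f 1"
    unfolding ipl_def r_def using lh by simp
  have "ipl lo hi (f - r) u = 0" if "degree u \<le> 0" for u
  proof -
    have "u = [:coeff u 0:]" using that by (intro poly_eqI) (auto simp: coeff_eq_0 coeff_pCons split: nat.split)
    also have "[:coeff u 0:] = smult (coeff u 0) 1" by (simp add: one_pCons)
    finally have "u = smult (coeff u 0) 1" .
    then have "ipl lo hi (f - r) u = coeff u 0 * ipl lo hi (f - r) 1" by (metis ipl_smult2)
    then show ?thesis using r1 by (simp add: ipl_diff)
  qed
  moreover have "degree r \<le> 0" by (simp add: r_def)
  ultimately show ?case by blast
next
  case (Suc n)
  obtain r0 where r0: "degree r0 \<le> n" "\<And>u. degree u \<le> n \<Longrightarrow> ipl lo hi (monom 1 (Suc n) - r0) u = 0"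
    using Suc.IH[of "monom 1 (Suc n)"] by blast
  define p where "p = monom 1 (Suc n) - r0"
  have cp: "coeff p (Suc n) = 1" using r0(1) by (simp add: p_def coeff_eq_0)
  have dp: "degree p \<le> Suc n" unfolding p_def using r0(1)
    by (intro degree_diff_le) (auto simp: degree_monom_eq)
  have pnz: "p \<noteq> 0" using cp by auto
  have porth: "ipl lo hi p u = 0" if "degree u \<le> n" for u using r0(2)[OF that] by (simp add: p_def)
  have pp: "ipl lo hi p p > 0" using ipl_pos[OF lh pnz] .
  obtain r1 where r1: "degree r1 \<le> n" "\<And>u. degree u \<le> n \<Longrightarrow> ipl lo hi (f - r1) u = 0"
    using Suc.IH[of f] by blast
  define \<beta> where "\<beta> = ipl lo hi f p / ipl lo hi p p"
  define r where "r = r1 + smult \<beta> p"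
  have dr: "degree r \<le> Suc n" unfolding r_def using r1(1) dp
    by (intro degree_add_le) (auto intro: order.trans[OF degree_smult_le])
  have fr1p: "ipl lo hi (f - r1) p = ipl lo hi f p"
    using porth[OF r1(1)] by (simp add: ipl_diff ipl_sym[of lo hi r1 p])
  have "ipl lo hi (f - r) u = 0" if du: "degree u \<le> Suc n" for u
  proof -
    define \<gamma> where "\<gamma> = coeff u (Suc n)"
    define u' where "u' = u - smult \<gamma> p"
    have du': "degree u' \<le> n"
    proof (rule degree_le, intro allI impI)
      fix i assume "n < i"
      then show "coeff u' i = 0"
      proof (cases "i = Suc n")
        case True then show ?thesis by (simp add: u'_def \<gamma>_def cp)
      next
        case False
        then have "Suc n < i" using \<open>n < i\<close> by simp
        then show ?thesis using du dp by (simp add: u'_def coeff_eq_0)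
      qed
    qed
    have uu: "u = u' + smult \<gamma> p" by (simp add: u'_def)
    have "ipl lo hi (f - r) u = ipl lo hi (f - r1) u' - \<beta> * ipl lo hi p u'
        + \<gamma> * ipl lo hi (f - r1) p - \<beta> * \<gamma> * ipl lo hi p p"
    proof -
      have "ipl lo hi (f - r) u = ipl lo hi (f - r1) u - \<beta> * ipl lo hi p u"
        unfolding r_def by (simp add: ipl_diff ipl_add ipl_smult diff_diff_eq[symmetric])
      also have "ipl lo hi (f - r1) u = ipl lo hi (f - r1) u' + \<gamma> * ipl lo hi (f - r1) p"
        unfolding uu by (simp add: ipl_add2 ipl_smult2)
      also have "ipl lo hi p u = ipl lo hi p u' + \<gamma> * ipl lo hi p p"
        unfolding uu by (simp add: ipl_add2 ipl_smult2)
      finally show ?thesis by (simp add: algebra_simps)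
    qed
    also have "\<dots> = \<gamma> * (ipl lo hi f p - \<beta> * ipl lo hi p p)"
      using r1(2)[OF du'] porth[OF du'] fr1p by (simp add: algebra_simps)
    also have "\<dots> = 0" using pp by (simp add: \<beta>_def)
    finally show ?thesis .
  qed
  with dr show ?case by blast
qed

lemma ortho_L:
  fixes lo hi :: real assumes lh: "lo < hi"
  shows "\<exists>L. degree L = Suc q \<and> coeff L (Suc q) = 1 \<and> (\<forall>u. degree u \<le> q \<longrightarrow> ipl lo hi L u = 0)"
proof -
  obtain r where r: "degree r \<le> q" "\<And>u. degree u \<le> q \<Longrightarrow> ipl lo hi (monom 1 (Suc q) - r) u = 0"
    using ortho_claim[OF lh, of q "monom 1 (Suc q)"] by blast
  define L where "L = monom 1 (Suc q) - r"
  have cL: "coeff L (Suc q) = 1" using r(1) by (simp add: L_def coeff_eq_0)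
  have dL: "degree L \<le> Suc q" unfolding L_def using r(1)
    by (intro degree_diff_le) (auto simp: degree_monom_eq)
  have "degree L = Suc q" using dL cL by (metis le_degree le_antisym zero_neq_one)
  then show ?thesis using cL r(2) unfolding L_def by blast
qed

definition isL :: "nat \<Rightarrow> real \<Rightarrow> real \<Rightarrow> real poly \<Rightarrow> bool" where
  "isL q lo hi L \<longleftrightarrow> degree L = Suc q \<and> coeff L (Suc q) = 1 \<and> (\<forall>u. degree u \<le> q \<longrightarrow> ipl lo hi L u = 0)"

lemma isL_ex: "lo < hi \<Longrightarrow> \<exists>L. isL q lo hi L"
  unfolding isL_def using ortho_L by blast

lemma L_orth:
  assumes "isL q lo hi L"
  shows "integral {lo..hi} (\<lambda>s. poly L s * (\<Sum>j\<le>q. s ^ j * b j)) = 0"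
proof -
  have "ipl lo hi L (spoly q b) = 0" using assms degree_spoly unfolding isL_def by blast
  then show ?thesis unfolding ipl_def poly_spoly by (simp add: mult.commute)
qed

lemma pev_diff: "pev d c s - pev d c' s = pev d (\<lambda>j. c j - c' j) s"
  unfolding pev_def by (simp add: sum_subtractf scaleR_diff_right)

lemma pev_split:
  assumes "isL q lo hi L"
  shows "pev (Suc q) x s = pev q (\<lambda>j. x j - coeff L j *\<^sub>R x (Suc q)) s + poly L s *\<^sub>R x (Suc q)"
proof -
  have dL: "degree L = Suc q" and cL: "coeff L (Suc q) = 1" using assms unfolding isL_def by auto
  have pL: "poly L s = (\<Sum>j\<le>q. coeff L j * s ^ j) + s ^ Suc q"
    unfolding poly_altdef dL using cL by simp
  have "pev q (\<lambda>j. x j - coeff L j *\<^sub>R x (Suc q)) s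
      = pev q x s - (\<Sum>j\<le>q. coeff L j * s ^ j) *\<^sub>R x (Suc q)"
    unfolding pev_def by (simp add: scaleR_diff_right sum_subtractf scaleR_sum_left ac_simps)
  then show ?thesis unfolding pL pev_Suc by (simp add: scaleR_add_left)
qed

lemma cont_inner_pev[continuous_intros]:
  "continuous_on S (\<lambda>s. f s * inner (pev d (c :: nat \<Rightarrow> 'h::real_inner) s) h)" if "continuous_on S f"
  using that by (intro continuous_intros)

lemma proj_eval:
  fixes x :: "nat \<Rightarrow> 'h::real_inner"
  assumes lh: "lo < hi" and L: "isL q lo hi L"
  shows "proj_poly q lo hi (pev (Suc q) x) = pev q (\<lambda>j. x j - coeff L j *\<^sub>R x (Suc q))"
proof -
  define cP where "cP = (\<lambda>j. x j - coeff L j *\<^sub>R x (Suc q))"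
  define PP where "PP = pev q cP"
  have split: "pev (Suc q) x s - PP s = poly L s *\<^sub>R x (Suc q)" for s
    using pev_split[OF L, of x s] by (simp add: PP_def cP_def)
  have int0: "integral {lo..hi} (\<lambda>s. s ^ j * inner (pev (Suc q) x s - PP s) h) = 0" if j: "j \<le> q" for j h
  proof -
    have "(\<lambda>s. s ^ j * inner (pev (Suc q) x s - PP s) h)
        = (\<lambda>s. inner (x (Suc q)) h * (poly L s * (\<Sum>k\<le>q. s ^ k * (if k = j then 1 else 0))))"
      using j by (auto simp: split if_distrib cong: if_cong)
    then show ?thesis using L_orth[OF L] by (simp add: Henstock_Kurzweil_Integration.integral_mult_right)
  qed
  have PP_prop: "(\<exists>c. PP = pev q c) \<and> (\<forall>j\<le>q. \<forall>h. integral {lo..hi} (\<lambda>s. s ^ j * inner (pev (Suc q) x s - PP s) h) = 0)"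
    using int0 by (auto simp: PP_def)
  have uniq: "P = PP" if hP: "(\<exists>c. P = pev q c) \<and> (\<forall>j\<le>q. \<forall>h. integral {lo..hi} (\<lambda>s. s ^ j * inner (pev (Suc q) x s - P s) h) = 0)" for P
  proof -
    obtain c' where c': "P = pev q c'" using hP by blast
    define dd where "dd = (\<lambda>j. cP j - c' j)"
    define D where "D = pev q dd"
    have Ds: "D s = (pev (Suc q) x s - P s) - (pev (Suc q) x s - PP s)" for s
      using pev_diff[of q cP s c'] by (simp add: D_def dd_def PP_def c')
    have ints: "(\<lambda>s. s ^ j * inner (pev (Suc q) x s - pev q c s) h) integrable_on {lo..hi}" for j h c
      by (intro integrable_continuous_interval continuous_intros)
    have Dj: "integral {lo..hi} (\<lambda>s. s ^ j * inner (D s) (dd j)) = 0" if j: "j \<le> q" for j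
    proof -
      have "(\<lambda>s. s ^ j * inner (D s) (dd j)) = (\<lambda>s. s ^ j * inner (pev (Suc q) x s - P s) (dd j) - s ^ j * inner (pev (Suc q) x s - PP s) (dd j))"
        by (simp add: Ds inner_diff_left algebra_simps)
      then have "integral {lo..hi} (\<lambda>s. s ^ j * inner (D s) (dd j))
          = integral {lo..hi} (\<lambda>s. s ^ j * inner (pev (Suc q) x s - P s) (dd j)) - integral {lo..hi} (\<lambda>s. s ^ j * inner (pev (Suc q) x s - PP s) (dd j))"
        using integral_diff[OF ints[where j=j and h="dd j" and c=c'] ints[where j=j and h="dd j" and c=cP]] by (simp add: c' PP_def)
      then show ?thesis using hP j PP_prop by simp
    qed
    have "integral {lo..hi} (\<lambda>s. inner (D s) (D s)) = integral {lo..hi} (\<lambda>s. \<Sum>j\<le>q. s ^ j * inner (D s) (dd j))"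
      by (simp add: D_def[symmetric] inner_pev_right[of "D _" q dd, unfolded D_def[symmetric]])
    also have "\<dots> = (\<Sum>j\<le>q. integral {lo..hi} (\<lambda>s. s ^ j * inner (D s) (dd j)))"
      by (rule integral_sum) (auto simp: D_def intro!: integrable_continuous_interval continuous_intros)
    also have "\<dots> = 0" using Dj by simp
    finally have "integral {lo..hi} (\<lambda>s. inner (D s) (D s)) = 0" .
    then have "\<forall>s\<in>{lo..hi}. inner (D s) (D s) = 0"
      using lh by (subst (asm) integral_eq_0_iff) (auto simp: D_def intro!: continuous_intros)
    then have "\<And>s. s \<in> {lo..hi} \<Longrightarrow> pev q dd s = 0" by (simp add: D_def)
    then have "dd j = 0" if "j \<le> q" for j using pev_zero_interval[OF lh _ that] by blast
    then have "c' j = cP j" if "j \<le> q" for j using that by (simp add: dd_def)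
    then show ?thesis unfolding c' PP_def pev_def by (intro ext sum.cong) auto
  qed
  have "proj_poly q lo hi (pev (Suc q) x) = PP"
    unfolding proj_poly_def
  proof (rule the_equality)
    show "(\<exists>c. PP = pev q c) \<and> (\<forall>j\<le>q. \<forall>h. integral {lo..hi} (\<lambda>s. s ^ j * inner (pev (Suc q) x s - PP s) h) = 0)"
      by (rule PP_prop)
    fix P assume "(\<exists>c. P = pev q c) \<and> (\<forall>j\<le>q. \<forall>h. integral {lo..hi} (\<lambda>s. s ^ j * inner (pev (Suc q) x s - P s) h) = 0)"
    then show "P = PP" by (rule uniq)
  qed
  then show ?thesis by (simp add: PP_def cP_def)
qed

context gfl begin

lemma pev_in: "(\<And>j. j \<le> d \<Longrightarrow> c j \<in> Vs) \<Longrightarrow> pev d c s \<in> Vs"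
  unfolding pev_def by (intro Vsum) auto

lemma pder_in: "(\<And>j. j \<le> d \<Longrightarrow> c j \<in> Vs) \<Longrightarrow> pder d c s \<in> Vs"
  unfolding pder_def by (intro Vsum) auto

lemma a_pev1: "(\<And>j. j \<le> d \<Longrightarrow> c j \<in> Vs) \<Longrightarrow> v \<in> Vs \<Longrightarrow> a (pev d c s) v = (\<Sum>j\<le>d. s ^ j * a (c j) v)"
  unfolding pev_def by (subst a_sum1) auto

lemma a_pev2: "(\<And>j. j \<le> d \<Longrightarrow> c j \<in> Vs) \<Longrightarrow> v \<in> Vs \<Longrightarrow> a v (pev d c s) = (\<Sum>j\<le>d. s ^ j * a v (c j))"
  unfolding pev_def by (subst a_sum2) auto

lemma a_pev_pev: "(\<And>j. j \<le> d \<Longrightarrow> c j \<in> Vs) \<Longrightarrow> (\<And>j. j \<le> d' \<Longrightarrow> c' j \<in> Vs) \<Longrightarrow>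
   a (pev d c s) (pev d' c' s) = (\<Sum>j\<le>d. \<Sum>k\<le>d'. s ^ j * s ^ k * a (c j) (c' k))"
proof -
  assume c: "\<And>j. j \<le> d \<Longrightarrow> c j \<in> Vs" and c': "\<And>j. j \<le> d' \<Longrightarrow> c' j \<in> Vs"
  have "a (pev d c s) (pev d' c' s) = (\<Sum>j\<le>d. s ^ j * a (c j) (pev d' c' s))"
    by (rule a_pev1[OF c pev_in[OF c']])
  also have "\<dots> = (\<Sum>j\<le>d. s ^ j * (\<Sum>k\<le>d'. s ^ k * a (c j) (c' k)))"
    using c by (intro sum.cong refl) (simp add: a_pev2[OF c'])
  finally show ?thesis by (simp add: sum_distrib_left mult.assoc)
qed

lemma cont_a_pev[continuous_intros]:
  "(\<And>j. j \<le> d \<Longrightarrow> c j \<in> Vs) \<Longrightarrow> (\<And>j. j \<le> d' \<Longrightarrow> c' j \<in> Vs) \<Longrightarrow>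
   continuous_on S (\<lambda>s. a (pev d c s) (pev d' c' s))"
  by (simp add: a_pev_pev cong: continuous_on_cong) (intro continuous_intros)

lemma a_pev_pos: "(\<And>j. j \<le> d \<Longrightarrow> c j \<in> Vs) \<Longrightarrow> a (pev d c s) (pev d c s) \<ge> 0"
  using pev_in by simp

lemma Vnz: "\<exists>v0. v0 \<in> Vs \<and> v0 \<noteq> 0" using nz V0 by blast

definition "Hset w = {inner w v / sqrt (a v v) | v. v \<in> Vs \<and> v \<noteq> 0}"

lemma Hm_def': "Hm1norm Vs a w = Sup (Hset w)" unfolding Hm1norm_def Hset_def ..

lemma Hset_ne: "Hset w \<noteq> {}" using Vnz unfolding Hset_def by blast

lemma Cd_ex: "\<exists>Cd>0. \<forall>v\<in>Vs. norm v \<le> sqrt Cd * sqrt (a v v)"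
proof -
  obtain Cd where Cd: "Cd > 0" "\<forall>v\<in>Vs. (norm v)^2 \<le> Cd * a v v" using emb by blast
  have "norm v \<le> sqrt Cd * sqrt (a v v)" if "v \<in> Vs" for v
  proof -
    have "norm v = sqrt ((norm v)^2)" by simp
    also have "\<dots> \<le> sqrt (Cd * a v v)" using Cd(2) that by (intro real_sqrt_le_mono) auto
    finally show ?thesis by (simp add: real_sqrt_mult)
  qed
  with Cd(1) show ?thesis by blast
qed

lemma ratio_bound: assumes "v \<in> Vs" "v \<noteq> 0" "norm v \<le> K * sqrt (a v v)"
  shows "inner w v / sqrt (a v v) \<le> norm w * K"
proof -
  have p: "sqrt (a v v) > 0" using a_pos[OF assms(1,2)] by simp
  have "inner w v \<le> norm w * norm v" using Cauchy_Schwarz_ineq2[of w v] by simp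
  also have "\<dots> \<le> norm w * (K * sqrt (a v v))" using assms(3) by (intro mult_left_mono) auto
  finally show ?thesis using p by (simp add: field_simps)
qed

lemma Hset_bdd: "bdd_above (Hset w)"
proof -
  obtain Cd where Cd: "Cd > 0" "\<forall>v\<in>Vs. norm v \<le> sqrt Cd * sqrt (a v v)" using Cd_ex by blast
  show ?thesis unfolding Hset_def
    by (rule bdd_aboveI[of _ "norm w * sqrt Cd"]) (auto intro!: ratio_bound simp: Cd)
qed

lemma Hm_ge: "v \<in> Vs \<Longrightarrow> v \<noteq> 0 \<Longrightarrow> inner w v / sqrt (a v v) \<le> Hm1norm Vs a w"
  unfolding Hm_def' by (rule cSup_upper[OF _ Hset_bdd]) (auto simp: Hset_def)

lemma Hm_le: "(\<And>v. v \<in> Vs \<Longrightarrow> v \<noteq> 0 \<Longrightarrow> inner w v / sqrt (a v v) \<le> B) \<Longrightarrow> Hm1norm Vs a w \<le> B"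
  unfolding Hm_def' by (rule cSup_least[OF Hset_ne]) (auto simp: Hset_def)

lemma Hm_nn: "Hm1norm Vs a w \<ge> 0"
proof -
  obtain v0 where v0: "v0 \<in> Vs" "v0 \<noteq> 0" using Vnz by blast
  show ?thesis
  proof (cases "inner w v0 \<ge> 0")
    case True
    have "0 \<le> inner w v0 / sqrt (a v0 v0)" using True a_nn[OF v0(1)] by (intro divide_nonneg_nonneg) auto
    also have "\<dots> \<le> Hm1norm Vs a w" by (rule Hm_ge[OF v0])
    finally show ?thesis .
  next
    case False
    have m: "- v0 \<in> Vs" "- v0 \<noteq> 0" using v0 by auto
    have "0 \<le> inner w (- v0) / sqrt (a (- v0) (- v0))" using False a_nn[OF m(1)] by (intro divide_nonneg_nonneg) auto
    also have "\<dots> \<le> Hm1norm Vs a w" by (rule Hm_ge[OF m])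
    finally show ?thesis .
  qed
qed

lemma Hm_quad: assumes u: "u \<in> Vs" shows "2 * inner w u - a u u \<le> (Hm1norm Vs a w)^2"
proof (cases "u = 0")
  case True then show ?thesis by simp
next
  case False
  define M where "M = Hm1norm Vs a w"
  define s where "s = sqrt (a u u)"
  have sp: "s > 0" using a_pos[OF u False] by (simp add: s_def)
  have ss: "s^2 = a u u" using a_nn[OF u] by (simp add: s_def)
  have "inner w u / s \<le> M" using Hm_ge[OF u False] by (simp add: M_def s_def)
  then have "inner w u \<le> M * s" using sp by (simp add: field_simps)
  moreover have "0 \<le> (M - s)^2" by simp
  ultimately have "2 * inner w u - s^2 \<le> M^2" using sp
    by (simp add: power2_eq_square algebra_simps)
  then show ?thesis using ss by (simp add: M_def)
qed

lemma Hm_lip: "Hm1norm Vs a w1 \<le> Hm1norm Vs a w2 + sqrt Cd * norm (w1 - w2)"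
  if Cd: "\<forall>v\<in>Vs. norm v \<le> sqrt Cd * sqrt (a v v)" for Cd
proof (rule Hm_le)
  fix v assume v: "v \<in> Vs" "v \<noteq> 0"
  have "inner w1 v / sqrt (a v v) = inner w2 v / sqrt (a v v) + inner (w1 - w2) v / sqrt (a v v)"
    by (simp add: inner_diff_left diff_divide_distrib)
  also have "\<dots> \<le> Hm1norm Vs a w2 + norm (w1 - w2) * sqrt Cd"
    using Hm_ge[OF v, of w2] ratio_bound[OF v, of "sqrt Cd" "w1 - w2"] Cd v by (intro add_mono) auto
  finally show "inner w1 v / sqrt (a v v) \<le> Hm1norm Vs a w2 + sqrt Cd * norm (w1 - w2)"
    by (simp add: mult.commute)
qed

lemma Hm_cont[continuous_intros]:
  assumes "continuous_on S f" shows "continuous_on S (\<lambda>s. Hm1norm Vs a (f s))"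
proof -
  obtain Cd where Cd: "Cd > 0" "\<forall>v\<in>Vs. norm v \<le> sqrt Cd * sqrt (a v v)" using Cd_ex by blast
  have "(sqrt Cd)-lipschitz_on UNIV (Hm1norm Vs a)"
  proof (rule lipschitz_onI)
    fix x y :: 'h
    have "Hm1norm Vs a x \<le> Hm1norm Vs a y + sqrt Cd * norm (x - y)" by (rule Hm_lip[OF Cd(2)])
    moreover have "Hm1norm Vs a y \<le> Hm1norm Vs a x + sqrt Cd * norm (y - x)" by (rule Hm_lip[OF Cd(2)])
    ultimately show "dist (Hm1norm Vs a x) (Hm1norm Vs a y) \<le> sqrt Cd * dist x y"
      by (simp add: dist_real_def dist_norm norm_minus_commute abs_le_iff)
  qed (use Cd(1) in simp)
  then have "continuous_on UNIV (Hm1norm Vs a)" by (rule lipschitz_on_continuous_on)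
  from continuous_on_compose2[OF this assms] show ?thesis by simp
qed

lemma Hm_weak: assumes g: "g \<in> Vs" and h: "\<And>u. u \<in> Vs \<Longrightarrow> inner w u = a g u"
  shows "(Hm1norm Vs a w)^2 \<le> a g g"
proof -
  have "Hm1norm Vs a w \<le> sqrt (a g g)"
  proof (rule Hm_le)
    fix v assume v: "v \<in> Vs" "v \<noteq> 0"
    have p: "sqrt (a v v) > 0" using a_pos[OF v] by simp
    have "a g v \<le> sqrt (a g g) * sqrt (a v v)"
    proof -
      have "(a g v)^2 \<le> a g g * a v v" by (rule a_CS[OF g v(1)])
      then have "\<bar>a g v\<bar> \<le> sqrt (a g g * a v v)" using real_sqrt_abs[of "a g v"] real_sqrt_le_mono by metis
      then show ?thesis by (simp add: real_sqrt_mult)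
    qed
    then show "inner w v / sqrt (a v v) \<le> sqrt (a g g)" using h[OF v(1)] p by (simp add: field_simps)
  qed
  then have "(Hm1norm Vs a w)^2 \<le> (sqrt (a g g))^2" using Hm_nn by (intro power_mono) auto
  then show ?thesis using a_nn[OF g] by simp
qed

end

context gfl begin

lemma interval_facts:
  assumes lh: "lo < hi" and L: "isL q lo hi L"
   and x: "\<And>j. j \<le> Suc q \<Longrightarrow> x j \<in> Vs" and y: "\<And>j. j \<le> q \<Longrightarrow> y j \<in> Vs"
  defines "cP \<equiv> (\<lambda>j. x j - coeff L j *\<^sub>R x (Suc q))"
  shows "proj_poly q lo hi (pev (Suc q) x) = pev q cP"
    and "\<And>j. j \<le> q \<Longrightarrow> cP j \<in> Vs"
    and "integral {lo..hi} (\<lambda>s. inner (pev q y s) (- pder (Suc q) x s) + a (pev q y s) (pev (Suc q) x s))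
         = integral {lo..hi} (\<lambda>s. a (pev q y s) (pev q cP s) - inner (pev q y s) (pder (Suc q) x s))"
    and "integral {lo..hi} (\<lambda>s. inner (pder (Suc q) x s) (pev q cP s))
         = ((norm (pev (Suc q) x hi))^2 - (norm (pev (Suc q) x lo))^2) / 2"
proof -
  show P_eq: "proj_poly q lo hi (pev (Suc q) x) = pev q cP"
    unfolding cP_def by (rule proj_eval[OF lh L])
  show cP: "\<And>j. j \<le> q \<Longrightarrow> cP j \<in> Vs" unfolding cP_def using x by simp
  have xq: "x (Suc q) \<in> Vs" using x by simp
  have Xs: "pev (Suc q) x s = pev q cP s + poly L s *\<^sub>R x (Suc q)" for s
    using pev_split[OF L] by (simp add: cP_def)
  have PV: "pev q cP s \<in> Vs" for s using pev_in cP by blast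
  have YV: "pev q y s \<in> Vs" for s using pev_in y by blast
  have ayx: "a (pev q y s) (pev (Suc q) x s) = a (pev q y s) (pev q cP s) + poly L s * (\<Sum>j\<le>q. s ^ j * a (y j) (x (Suc q)))" for s
    unfolding Xs using PV YV xq by (simp add: a_pev1[OF y xq])
  have "integral {lo..hi} (\<lambda>s. inner (pev q y s) (- pder (Suc q) x s) + a (pev q y s) (pev (Suc q) x s))
      = integral {lo..hi} (\<lambda>s. (a (pev q y s) (pev q cP s) - inner (pev q y s) (pder (Suc q) x s))
             + poly L s * (\<Sum>j\<le>q. s ^ j * a (y j) (x (Suc q))))"
    by (simp add: ayx algebra_simps)
  also have "\<dots> = integral {lo..hi} (\<lambda>s. a (pev q y s) (pev q cP s) - inner (pev q y s) (pder (Suc q) x s))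
             + integral {lo..hi} (\<lambda>s. poly L s * (\<Sum>j\<le>q. s ^ j * a (y j) (x (Suc q))))"
    by (intro integral_add integrable_continuous_interval continuous_intros y cP)
  also have "integral {lo..hi} (\<lambda>s. poly L s * (\<Sum>j\<le>q. s ^ j * a (y j) (x (Suc q)))) = 0"
    by (rule L_orth[OF L])
  finally show "integral {lo..hi} (\<lambda>s. inner (pev q y s) (- pder (Suc q) x s) + a (pev q y s) (pev (Suc q) x s))
         = integral {lo..hi} (\<lambda>s. a (pev q y s) (pev q cP s) - inner (pev q y s) (pder (Suc q) x s))" by simp
  have wx: "inner (pder (Suc q) x s) (pev (Suc q) x s) = inner (pder (Suc q) x s) (pev q cP s)
        + poly L s * (\<Sum>j\<le>q. s ^ j * inner (real (Suc j) *\<^sub>R x (Suc j)) (x (Suc q)))" for s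
    unfolding Xs by (simp add: inner_add_right pder_as_pev inner_pev_left)
  have "integral {lo..hi} (\<lambda>s. inner (pder (Suc q) x s) (pev (Suc q) x s))
      = ((norm (pev (Suc q) x hi))^2 - (norm (pev (Suc q) x lo))^2) / 2"
    using ftc_norm[of lo hi "Suc q" x] lh by (simp add: integral_unique)
  moreover have "integral {lo..hi} (\<lambda>s. inner (pder (Suc q) x s) (pev (Suc q) x s))
      = integral {lo..hi} (\<lambda>s. inner (pder (Suc q) x s) (pev q cP s))
        + integral {lo..hi} (\<lambda>s. poly L s * (\<Sum>j\<le>q. s ^ j * inner (real (Suc j) *\<^sub>R x (Suc j)) (x (Suc q))))"
    unfolding wx by (intro integral_add integrable_continuous_interval continuous_intros)
  moreover have "integral {lo..hi} (\<lambda>s. poly L s * (\<Sum>j\<le>q. s ^ j * inner (real (Suc j) *\<^sub>R x (Suc j)) (x (Suc q)))) = 0"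
    by (rule L_orth[OF L])
  ultimately show "integral {lo..hi} (\<lambda>s. inner (pder (Suc q) x s) (pev q cP s))
         = ((norm (pev (Suc q) x hi))^2 - (norm (pev (Suc q) x lo))^2) / 2" by simp
qed


lemma interval_upper:
  assumes lh: "lo < hi" and L: "isL q lo hi L"
   and x: "\<And>j. j \<le> Suc q \<Longrightarrow> x j \<in> Vs" and y: "\<And>j. j \<le> q \<Longrightarrow> y j \<in> Vs" and mu: "\<mu> > 0"
  shows "2 * \<mu> * integral {lo..hi} (\<lambda>s. inner (pev q y s) (- pder (Suc q) x s) + a (pev q y s) (pev (Suc q) x s))
     \<le> \<mu>^2 * integral {lo..hi} (\<lambda>s. a (pev q y s) (pev q y s))
       + integral {lo..hi} (\<lambda>s. (Hm1norm Vs a (pder (Suc q) x s))^2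
            + a (proj_poly q lo hi (pev (Suc q) x) s) (proj_poly q lo hi (pev (Suc q) x) s))
       - ((norm (pev (Suc q) x hi))^2 - (norm (pev (Suc q) x lo))^2)"
proof -
  define cP where "cP = (\<lambda>j. x j - coeff L j *\<^sub>R x (Suc q))"
  note F = interval_facts[where x=x and y=y and L=L, OF lh L x y, folded cP_def]
  define A where "A = (\<lambda>s. a (pev q y s) (pev q y s))"
  define B where "B = (\<lambda>s. (Hm1norm Vs a (pder (Suc q) x s))^2 + a (pev q cP s) (pev q cP s))"
  define C where "C = (\<lambda>s. inner (pder (Suc q) x s) (pev q cP s))"
  define D where "D = (\<lambda>s. a (pev q y s) (pev q cP s) - inner (pev q y s) (pder (Suc q) x s))"
  have cP: "\<And>j. j \<le> q \<Longrightarrow> cP j \<in> Vs" unfolding cP_def using x by simp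
  have iA: "A integrable_on {lo..hi}" unfolding A_def by (intro integrable_continuous_interval continuous_intros y)
  have iB: "B integrable_on {lo..hi}" unfolding B_def by (intro integrable_continuous_interval continuous_intros cP)
  have iC: "C integrable_on {lo..hi}" unfolding C_def by (intro integrable_continuous_interval continuous_intros)
  have iD: "D integrable_on {lo..hi}" unfolding D_def by (intro integrable_continuous_interval continuous_intros y cP)
  have pw: "2 * \<mu> * D s \<le> \<mu>^2 * A s + B s - 2 * C s" for s
  proof -
    define P where "P = pev q cP s"
    define Y where "Y = pev q y s"
    define w where "w = pder (Suc q) x s"
    have PV: "P \<in> Vs" unfolding P_def using pev_in cP by blast
    have YV: "Y \<in> Vs" unfolding Y_def using pev_in y by blast
    have "2 * inner w (1 *\<^sub>R P + (- \<mu>) *\<^sub>R Y) - a (1 *\<^sub>R P + (- \<mu>) *\<^sub>R Y) (1 *\<^sub>R P + (- \<mu>) *\<^sub>R Y)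
        \<le> (Hm1norm Vs a w)^2" using PV YV by (intro Hm_quad) auto
    also have "a (1 *\<^sub>R P + (- \<mu>) *\<^sub>R Y) (1 *\<^sub>R P + (- \<mu>) *\<^sub>R Y) = a P P - 2 * \<mu> * a P Y + \<mu>^2 * a Y Y"
      using a_expand[OF PV YV, of 1 "-\<mu>"] by simp
    finally have "2 * inner w P - 2 * \<mu> * inner w Y - (a P P - 2 * \<mu> * a P Y + \<mu>^2 * a Y Y) \<le> (Hm1norm Vs a w)^2"
      by (simp add: inner_add_right inner_diff_right)
    moreover have "a P Y = a Y P" using a_sym[OF PV YV] .
    moreover have "inner Y w = inner w Y" by (simp add: inner_commute)
    ultimately show ?thesis unfolding A_def B_def C_def D_def P_def[symmetric] Y_def[symmetric] w_def[symmetric]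
      by (simp add: algebra_simps)
  qed
  have iD2: "(\<lambda>s. 2 * \<mu> * D s) integrable_on {lo..hi}"
    unfolding D_def by (intro integrable_continuous_interval continuous_intros y cP)
  have iA2: "(\<lambda>s. \<mu>^2 * A s) integrable_on {lo..hi}"
    unfolding A_def by (intro integrable_continuous_interval continuous_intros y cP)
  have iAB: "(\<lambda>s. \<mu>^2 * A s + B s) integrable_on {lo..hi}"
    unfolding A_def B_def by (intro integrable_continuous_interval continuous_intros y cP)
  have iC2: "(\<lambda>s. 2 * C s) integrable_on {lo..hi}"
    unfolding C_def by (intro integrable_continuous_interval continuous_intros y cP)
  have iR: "(\<lambda>s. \<mu>^2 * A s + B s - 2 * C s) integrable_on {lo..hi}"
    unfolding A_def B_def C_def by (intro integrable_continuous_interval continuous_intros y cP)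
  have "integral {lo..hi} (\<lambda>s. 2 * \<mu> * D s) \<le> integral {lo..hi} (\<lambda>s. \<mu>^2 * A s + B s - 2 * C s)"
    by (rule integral_le[OF iD2 iR]) (use pw in auto)
  moreover have "integral {lo..hi} (\<lambda>s. 2 * \<mu> * D s) = 2 * \<mu> * integral {lo..hi} D"
    by (simp add: Henstock_Kurzweil_Integration.integral_mult_right)
  moreover have "integral {lo..hi} (\<lambda>s. \<mu>^2 * A s + B s - 2 * C s)
      = \<mu>^2 * integral {lo..hi} A + integral {lo..hi} B - 2 * integral {lo..hi} C"
    using integral_diff[OF iAB iC2] integral_add[OF iA2 iB]
    by (simp add: Henstock_Kurzweil_Integration.integral_mult_right)
  ultimately have "2 * \<mu> * integral {lo..hi} D \<le> \<mu>^2 * integral {lo..hi} A + integral {lo..hi} B - 2 * integral {lo..hi} C"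
    by simp
  moreover have "integral {lo..hi} C = ((norm (pev (Suc q) x hi))^2 - (norm (pev (Suc q) x lo))^2) / 2"
    unfolding C_def by (rule F(4))
  ultimately show ?thesis using F(1) F(3) unfolding A_def B_def D_def by (simp; linarith)
qed

lemma interval_lower:
  assumes lh: "lo < hi" and L: "isL q lo hi L"
   and x: "\<And>j. j \<le> Suc q \<Longrightarrow> x j \<in> Vs" and y: "\<And>j. j \<le> q \<Longrightarrow> y j \<in> Vs"
   and yt: "\<And>j. j \<le> q \<Longrightarrow> yt j \<in> Vs"
   and weak: "\<And>s u. u \<in> Vs \<Longrightarrow> inner (pder (Suc q) x s) u = a (proj_poly q lo hi (pev (Suc q) x) s - pev q yt s) u"
  shows "integral {lo..hi} (\<lambda>s. inner (pev q y s) (- pder (Suc q) x s) + a (pev q y s) (pev (Suc q) x s))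
          = integral {lo..hi} (\<lambda>s. a (pev q y s) (pev q yt s))"
    and "integral {lo..hi} (\<lambda>s. (Hm1norm Vs a (pder (Suc q) x s))^2
            + a (proj_poly q lo hi (pev (Suc q) x) s) (proj_poly q lo hi (pev (Suc q) x) s))
         \<le> ((norm (pev (Suc q) x hi))^2 - (norm (pev (Suc q) x lo))^2) + integral {lo..hi} (\<lambda>s. a (pev q yt s) (pev q yt s))"
proof -
  define cP where "cP = (\<lambda>j. x j - coeff L j *\<^sub>R x (Suc q))"
  note F = interval_facts[where x=x and y=y and L=L, OF lh L x y, folded cP_def]
  have cP: "\<And>j. j \<le> q \<Longrightarrow> cP j \<in> Vs" unfolding cP_def using x by simp
  have PV: "pev q cP s \<in> Vs" for s using pev_in cP by blast
  have YV: "pev q y s \<in> Vs" for s using pev_in y by blast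
  have TV: "pev q yt s \<in> Vs" for s using pev_in yt by blast
  have wk: "inner (pder (Suc q) x s) u = a (pev q cP s) u - a (pev q yt s) u" if "u \<in> Vs" for s u
    using weak[OF that, of s] F(1) PV TV that by simp
  have "(\<lambda>s. a (pev q y s) (pev q cP s) - inner (pev q y s) (pder (Suc q) x s)) = (\<lambda>s. a (pev q y s) (pev q yt s))"
  proof
    fix s
    have "inner (pev q y s) (pder (Suc q) x s) = a (pev q cP s) (pev q y s) - a (pev q yt s) (pev q y s)"
      using wk[OF YV, of s] by (simp add: inner_commute)
    then show "a (pev q y s) (pev q cP s) - inner (pev q y s) (pder (Suc q) x s) = a (pev q y s) (pev q yt s)"
      using a_sym[OF PV YV, of s s] a_sym[OF TV YV, of s s] by simp
  qed
  then show "integral {lo..hi} (\<lambda>s. inner (pev q y s) (- pder (Suc q) x s) + a (pev q y s) (pev (Suc q) x s))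
          = integral {lo..hi} (\<lambda>s. a (pev q y s) (pev q yt s))" using F(3) by simp
  have pw: "(Hm1norm Vs a (pder (Suc q) x s))^2 + a (pev q cP s) (pev q cP s)
      \<le> 2 * inner (pder (Suc q) x s) (pev q cP s) + a (pev q yt s) (pev q yt s)" for s
  proof -
    define P where "P = pev q cP s"
    define T where "T = pev q yt s"
    have P: "P \<in> Vs" and T: "T \<in> Vs" using PV TV by (auto simp: P_def T_def)
    have "(Hm1norm Vs a (pder (Suc q) x s))^2 \<le> a (P - T) (P - T)"
      using P T by (intro Hm_weak) (auto simp: wk P_def T_def)
    also have "a (P - T) (P - T) = a P P - 2 * a P T + a T T"
      using a_expand[OF P T, of 1 "-1"] by simp
    finally show ?thesis using wk[OF P, of s] a_sym[OF P T] unfolding P_def[symmetric] T_def[symmetric] by simp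
  qed
  have "integral {lo..hi} (\<lambda>s. (Hm1norm Vs a (pder (Suc q) x s))^2 + a (pev q cP s) (pev q cP s))
      \<le> integral {lo..hi} (\<lambda>s. 2 * inner (pder (Suc q) x s) (pev q cP s) + a (pev q yt s) (pev q yt s))"
    by (rule integral_le) (auto intro!: integrable_continuous_interval continuous_intros cP yt pw)
  also have "\<dots> = 2 * integral {lo..hi} (\<lambda>s. inner (pder (Suc q) x s) (pev q cP s)) + integral {lo..hi} (\<lambda>s. a (pev q yt s) (pev q yt s))"
    by (subst integral_add) (auto intro!: integrable_continuous_interval continuous_intros yt
        simp: Henstock_Kurzweil_Integration.integral_mult_right)
  finally show "integral {lo..hi} (\<lambda>s. (Hm1norm Vs a (pder (Suc q) x s))^2
            + a (proj_poly q lo hi (pev (Suc q) x) s) (proj_poly q lo hi (pev (Suc q) x) s))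
         \<le> ((norm (pev (Suc q) x hi))^2 - (norm (pev (Suc q) x lo))^2) + integral {lo..hi} (\<lambda>s. a (pev q yt s) (pev q yt s))"
    using F(1) F(4) by (simp; linarith)
qed

end

lemma sqrt_bound:
  fixes B P Q :: real
  assumes h: "\<And>\<mu>. \<mu> > 0 \<Longrightarrow> 2 * \<mu> * B \<le> \<mu>^2 * P + Q" and P: "P \<ge> 0" and Q: "Q \<ge> 0"
  shows "B \<le> sqrt P * sqrt Q"
proof (cases "P > 0 \<and> Q > 0")
  case True
  define \<mu> where "\<mu> = sqrt Q / sqrt P"
  have mp: "\<mu> > 0" using True by (simp add: \<mu>_def)
  have "\<mu>^2 * P = Q" using True by (simp add: \<mu>_def power_divide)
  then have "2 * \<mu> * B \<le> 2 * Q" using h[OF mp] by simp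
  then have "\<mu> * B \<le> Q" by simp
  then have "B \<le> Q / \<mu>" using mp by (simp add: field_simps)
  also have "Q / \<mu> = sqrt P * sqrt Q" using True
    by (simp add: \<mu>_def field_simps)
  finally show ?thesis .
next
  case False
  have "B \<le> 0"
  proof (rule ccontr)
    assume "\<not> B \<le> 0"
    then have Bp: "B > 0" by simp
    show False
    proof (cases "P = 0")
      case True
      define \<mu> where "\<mu> = (Q + 1) / B"
      have mp: "\<mu> > 0" using Bp Q by (simp add: \<mu>_def)
      have "2 * \<mu> * B = 2 * (Q + 1)" using Bp by (simp add: \<mu>_def)
      then show False using h[OF mp] True Q by simp
    next
      case False
      then have Q0: "Q = 0" using \<open>\<not> (P > 0 \<and> Q > 0)\<close> P Q by simp
      define \<mu> where "\<mu> = B / (P + 1)"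
      have mp: "\<mu> > 0" using Bp P by (simp add: \<mu>_def)
      have "2 * \<mu> * B \<le> \<mu>^2 * P" using h[OF mp] Q0 by simp
      then have "\<mu> * (2 * B) \<le> \<mu> * (\<mu> * P)" by (simp add: power2_eq_square algebra_simps)
      then have "2 * B \<le> \<mu> * P" using mp by simp
      moreover have "\<mu> * P < B" using Bp P by (simp add: \<mu>_def field_simps)
      ultimately show False using Bp by simp
    qed
  qed
  moreover have "0 \<le> sqrt P * sqrt Q" using P Q by simp
  ultimately show ?thesis by linarith
qed

lemma telescope:
  fixes h l :: "nat \<Rightarrow> real"
  assumes "\<And>i. Suc i < N \<Longrightarrow> l (Suc i) = h i" and "N \<ge> 1"
  shows "(\<Sum>i<N. h i - l i) = h (N - 1) - l 0"
proof -
  have "1 \<le> n \<Longrightarrow> n \<le> N \<Longrightarrow> (\<Sum>i<n. h i - l i) = h (n - 1) - l 0" for n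
  proof (induction n)
    case 0 then show ?case by simp
  next
    case (Suc n)
    show ?case
    proof (cases "n = 0")
      case True then show ?thesis by simp
    next
      case False
      then have "(\<Sum>i<n. h i - l i) = h (n - 1) - l 0" using Suc by simp
      moreover have "l n = h (n - 1)" using assms(1)[of "n - 1"] Suc.prems False by simp
      ultimately show ?thesis by simp
    qed
  qed
  with assms(2) show ?thesis by simp
qed

locale gflt = gfl +
  fixes N q :: nat and t :: "nat \<Rightarrow> real"
  assumes N1: "N \<ge> 1" and tinc: "\<And>i. i < N \<Longrightarrow> t i < t (Suc i)"
begin

definition "Ls i = (SOME L. isL q (t i) (t (Suc i)) L)"

lemma Ls: "i < N \<Longrightarrow> isL q (t i) (t (Suc i)) (Ls i)"
  unfolding Ls_def using isL_ex[OF tinc] by (rule someI_ex)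

lemma q1: "q + 1 = Suc q" by simp

lemma Ynn: "fst Y \<in> Ycoef Vs N q \<Longrightarrow> Ynorm_sq a N t q Y \<ge> 0"
  unfolding Ynorm_sq_def Ycoef_def
  by (intro add_nonneg_nonneg sum_nonneg Henstock_Kurzweil_Integration.integral_nonneg
      integrable_continuous_interval continuous_intros) (auto intro!: a_pev_pos)

lemma Xnn: "x \<in> Xcoef Vs N t q \<Longrightarrow> Xnorm_sq Vs a N t q x \<ge> 0"
proof -
  assume x: "x \<in> Xcoef Vs N t q"
  have "integral {t i..t (Suc i)} (\<lambda>s. (Hm1norm Vs a (pder (q+1) (x i) s))\<^sup>2 +
         a (proj_poly q (t i) (t (Suc i)) (pev (q+1) (x i)) s) (proj_poly q (t i) (t (Suc i)) (pev (q+1) (x i)) s)) \<ge> 0"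
    if i: "i < N" for i
  proof -
    have xi: "\<And>j. j \<le> Suc q \<Longrightarrow> x i j \<in> Vs" using x i by (simp add: Xcoef_def)
    have PE: "proj_poly q (t i) (t (Suc i)) (pev (Suc q) (x i)) = pev q (\<lambda>j. x i j - coeff (Ls i) j *\<^sub>R x i (Suc q))"
      by (rule proj_eval[OF tinc[OF i] Ls[OF i]])
    have cPV: "\<And>j. j \<le> q \<Longrightarrow> x i j - coeff (Ls i) j *\<^sub>R x i (Suc q) \<in> Vs" using xi by simp
    show ?thesis unfolding q1 PE
      by (intro Henstock_Kurzweil_Integration.integral_nonneg integrable_continuous_interval continuous_intros cPV)
         (auto intro!: add_nonneg_nonneg a_pev_pos cPV)
  qed
  then show ?thesis unfolding Xnorm_sq_def by (intro add_nonneg_nonneg sum_nonneg) auto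
qed

lemma upper_mu:
  assumes Y: "fst Y \<in> Ycoef Vs N q" and x: "x \<in> Xcoef Vs N t q" and mu: "\<mu> > 0"
  shows "2 * \<mu> * Bstar a N t q Y x \<le> \<mu>^2 * Ynorm_sq a N t q Y + Xnorm_sq Vs a N t q x"
proof -
  define hh where "hh i = (norm (pev (Suc q) (x i) (t (Suc i))))^2" for i
  define ll where "ll i = (norm (pev (Suc q) (x i) (t i)))^2" for i
  define BI where "BI i = integral {t i..t (Suc i)} (\<lambda>s. inner (pev q (fst Y i) s) (- pder (Suc q) (x i) s)
        + a (pev q (fst Y i) s) (pev (Suc q) (x i) s))" for i
  define YI where "YI i = integral {t i..t (Suc i)} (\<lambda>s. a (pev q (fst Y i) s) (pev q (fst Y i) s))" for i
  define XI where "XI i = integral {t i..t (Suc i)} (\<lambda>s. (Hm1norm Vs a (pder (Suc q) (x i) s))^2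
            + a (proj_poly q (t i) (t (Suc i)) (pev (Suc q) (x i)) s) (proj_poly q (t i) (t (Suc i)) (pev (Suc q) (x i)) s))" for i
  have each: "2 * \<mu> * BI i \<le> \<mu>^2 * YI i + XI i - (hh i - ll i)" if i: "i < N" for i
  proof -
    have xi: "\<And>j. j \<le> Suc q \<Longrightarrow> x i j \<in> Vs" using x i by (simp add: Xcoef_def)
    have yi: "\<And>j. j \<le> q \<Longrightarrow> fst Y i j \<in> Vs" using Y i by (simp add: Ycoef_def)
    show ?thesis unfolding BI_def YI_def XI_def hh_def ll_def
      by (rule interval_upper[OF tinc[OF i] Ls[OF i] xi yi mu])
  qed
  have tel: "(\<Sum>i<N. hh i - ll i) = hh (N - 1) - ll 0"
    by (rule telescope[OF _ N1]) (use x in \<open>auto simp: Xcoef_def hh_def ll_def\<close>)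
  have "2 * \<mu> * (\<Sum>i<N. BI i) \<le> (\<Sum>i<N. \<mu>^2 * YI i + XI i - (hh i - ll i))"
    unfolding sum_distrib_left by (intro sum_mono each) simp
  also have "\<dots> = \<mu>^2 * (\<Sum>i<N. YI i) + (\<Sum>i<N. XI i) - (hh (N - 1) - ll 0)"
    using tel by (simp add: sum.distrib sum_subtractf sum_distrib_left; linarith)
  finally have s1: "2 * \<mu> * (\<Sum>i<N. BI i) \<le> \<mu>^2 * (\<Sum>i<N. YI i) + (\<Sum>i<N. XI i) - (hh (N - 1) - ll 0)" .
  have NN: "Suc (N - 1) = N" using N1 by simp
  have s2: "2 * \<mu> * inner (snd Y) (pev (Suc q) (x (N - 1)) (t N)) \<le> \<mu>^2 * (norm (snd Y))^2 + hh (N - 1)"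
  proof -
    define z where "z = pev (Suc q) (x (N - 1)) (t N)"
    define Y2 where "Y2 = snd Y"
    have "0 \<le> inner (\<mu> *\<^sub>R Y2 - z) (\<mu> *\<^sub>R Y2 - z)" by simp
    also have "inner (\<mu> *\<^sub>R Y2 - z) (\<mu> *\<^sub>R Y2 - z) = \<mu>^2 * inner Y2 Y2 - 2 * \<mu> * inner Y2 z + inner z z"
      by (simp add: inner_diff_left inner_diff_right inner_commute[of z Y2] power2_eq_square algebra_simps)
    finally show ?thesis unfolding hh_def NN z_def[symmetric] Y2_def[symmetric] by (simp add: power2_norm_eq_inner)
  qed
  have B: "Bstar a N t q Y x = (\<Sum>i<N. BI i) + inner (snd Y) (pev (Suc q) (x (N - 1)) (t N))"
    unfolding Bstar_def BI_def q1 ..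
  have Yn: "Ynorm_sq a N t q Y = (norm (snd Y))^2 + (\<Sum>i<N. YI i)"
    unfolding Ynorm_sq_def YI_def ..
  have Xn: "Xnorm_sq Vs a N t q x = ll 0 + (\<Sum>i<N. XI i)"
    unfolding Xnorm_sq_def XI_def ll_def q1 by simp
  show ?thesis unfolding B Yn Xn using s1 s2 by (simp add: algebra_simps)
qed

lemma upper:
  assumes Y: "fst Y \<in> Ycoef Vs N q" and x: "x \<in> Xcoef Vs N t q"
  shows "Bstar a N t q Y x \<le> sqrt (Ynorm_sq a N t q Y) * sqrt (Xnorm_sq Vs a N t q x)"
  by (rule sqrt_bound[OF upper_mu[OF Y x] Ynn[OF Y] Xnn[OF x]])

lemma ratio_le1:
  assumes Y: "fst Y \<in> Ycoef Vs N q" and x: "x \<in> Xcoef Vs N t q"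
  shows "Bstar a N t q Y x / (sqrt (Ynorm_sq a N t q Y) * sqrt (Xnorm_sq Vs a N t q x)) \<le> 1"
proof -
  have d: "sqrt (Ynorm_sq a N t q Y) * sqrt (Xnorm_sq Vs a N t q x) \<ge> 0"
    using Ynn[OF Y] Xnn[OF x] by simp
  show ?thesis
  proof (cases "sqrt (Ynorm_sq a N t q Y) * sqrt (Xnorm_sq Vs a N t q x) = 0")
    case True then show ?thesis unfolding True by simp
  next
    case False
    then have "sqrt (Ynorm_sq a N t q Y) * sqrt (Xnorm_sq Vs a N t q x) > 0" using d by linarith
    then show ?thesis using upper[OF Y x] by (simp add: divide_le_eq_1)
  qed
qed

end

primrec prr :: "('h \<Rightarrow> 'h) \<Rightarrow> nat \<Rightarrow> (nat \<Rightarrow> 'h::real_vector) \<Rightarrow> nat \<Rightarrow> 'h" where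
  "prr K q g 0 = 0"
| "prr K q g (Suc k) = g (q - k) + real (Suc (q - k)) *\<^sub>R K (prr K q g k)"

definition prr_at :: "('h \<Rightarrow> 'h) \<Rightarrow> nat \<Rightarrow> (nat \<Rightarrow> 'h::real_vector) \<Rightarrow> nat \<Rightarrow> 'h" where
  "prr_at K q g m = prr K q g (Suc q - m)"

lemma pr_top: "prr_at K q g (Suc q) = 0" by (simp add: prr_at_def)

lemma pr_rec: "m \<le> q \<Longrightarrow> prr_at K q g m = g m + real (Suc m) *\<^sub>R K (prr_at K q g (Suc m))"
proof -
  assume m: "m \<le> q"
  have "prr_at K q g m = prr K q g (Suc (q - m))" using m by (simp add: prr_at_def Suc_diff_le)
  also have "\<dots> = g (q - (q - m)) + real (Suc (q - (q - m))) *\<^sub>R K (prr K q g (q - m))" by simp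
  also have "q - (q - m) = m" using m by simp
  also have "prr K q g (q - m) = prr_at K q g (Suc m)" by (simp add: prr_at_def)
  finally show ?thesis .
qed

lemma pev_add: "pev d (\<lambda>j. f j + g j) s = pev d f s + pev d g s"
  unfolding pev_def by (simp add: scaleR_add_right sum.distrib)

lemma pev_delta0: "pev d (\<lambda>j. if j = 0 then v else 0) s = v"
  unfolding pev_def by (simp add: if_distrib cong: if_cong)

context gflt begin

abbreviation "PR g \<equiv> prr_at Kop q g"

lemma prr_in: "(\<And>j. j \<le> q \<Longrightarrow> g j \<in> Vs) \<Longrightarrow> prr Kop q g k \<in> Vs"
  by (induction k) auto

lemma PR_in: "(\<And>j. j \<le> q \<Longrightarrow> g j \<in> Vs) \<Longrightarrow> PR g m \<in> Vs"
  unfolding prr_at_def by (rule prr_in)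

lemma prr_add: "prr Kop q (\<lambda>j. g1 j + g2 j) k = prr Kop q g1 k + prr Kop q g2 k"
  by (induction k) (auto simp: K_add scaleR_add_right)

lemma PR_add: "PR (\<lambda>j. g1 j + g2 j) m = PR g1 m + PR g2 m"
  unfolding prr_at_def by (rule prr_add)

lemma prr_scale: "prr Kop q (\<lambda>j. r *\<^sub>R g j) k = r *\<^sub>R prr Kop q g k"
  by (induction k) (auto simp: K_scale scaleR_add_right)

lemma prr_K: "prr Kop q (\<lambda>j. Kop (g j)) k = Kop (prr Kop q g k)"
  by (induction k) (auto simp: K_add K_scale K_zero)

lemma prr_zero: "prr Kop q (\<lambda>j. 0) k = 0"
  by (induction k) (auto simp: K_zero)

lemma prr_delta0: "k \<le> Suc q \<Longrightarrow> prr Kop q (\<lambda>j. if j = 0 then d else 0) k = (if k = Suc q then d else 0)"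
proof (induction k)
  case 0 then show ?case by simp
next
  case (Suc k)
  then have IH: "prr Kop q (\<lambda>j. if j = 0 then d else 0) k = 0" by simp
  show ?case
  proof (cases "k = q")
    case True then show ?thesis using IH by (simp add: K_zero)
  next
    case False then have "q - k \<noteq> 0" using Suc.prems by simp
    then show ?thesis using IH False by (simp add: K_zero)
  qed
qed

lemma PR_delta0: "m \<le> q \<Longrightarrow> PR (\<lambda>j. if j = 0 then d else 0) m = (if m = 0 then d else 0)"
  unfolding prr_at_def by (subst prr_delta0) auto

definition "Gc i c = (\<lambda>j. coeff (pderiv (Ls i)) j *\<^sub>R Kop c)"

definition "xsol i g c = (\<lambda>j. PR g j + coeff (Ls i) j *\<^sub>R c)"

definition "Eop i c = pev q (PR (Gc i c)) (t (Suc i)) + poly (Ls i) (t (Suc i)) *\<^sub>R c"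

lemma cL1: "i < N \<Longrightarrow> coeff (Ls i) (Suc q) = 1" using Ls unfolding isL_def by blast

lemma xsol_props:
  assumes i: "i < N" and yt: "\<And>j. j \<le> q \<Longrightarrow> yt j \<in> Vs" and c: "c \<in> Vs"
  defines "g \<equiv> (\<lambda>j. yt j + Gc i c j)"
  shows "\<And>j. j \<le> Suc q \<Longrightarrow> xsol i g c j \<in> Vs"
    and "xsol i g c (Suc q) = c"
    and "proj_poly q (t i) (t (Suc i)) (pev (Suc q) (xsol i g c)) = pev q (PR g)"
    and "\<And>s u. u \<in> Vs \<Longrightarrow> inner (pder (Suc q) (xsol i g c) s) u
            = a (proj_poly q (t i) (t (Suc i)) (pev (Suc q) (xsol i g c)) s - pev q yt s) u"
    and "pev (Suc q) (xsol i g c) (t (Suc i)) = pev q (PR g) (t (Suc i)) + poly (Ls i) (t (Suc i)) *\<^sub>R c"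
proof -
  have gV: "\<And>j. j \<le> q \<Longrightarrow> g j \<in> Vs" unfolding g_def Gc_def using yt c by simp
  show xV: "\<And>j. j \<le> Suc q \<Longrightarrow> xsol i g c j \<in> Vs" unfolding xsol_def using PR_in[OF gV] c by simp
  show xq: "xsol i g c (Suc q) = c" unfolding xsol_def using pr_top cL1[OF i] by simp
  have PE: "proj_poly q (t i) (t (Suc i)) (pev (Suc q) (xsol i g c))
      = pev q (\<lambda>j. xsol i g c j - coeff (Ls i) j *\<^sub>R xsol i g c (Suc q))"
    by (rule proj_eval[OF tinc[OF i] Ls[OF i]])
  also have "(\<lambda>j. xsol i g c j - coeff (Ls i) j *\<^sub>R xsol i g c (Suc q)) = PR g"
    unfolding xq by (simp add: xsol_def)
  finally show PE': "proj_poly q (t i) (t (Suc i)) (pev (Suc q) (xsol i g c)) = pev q (PR g)" .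
  show "pev (Suc q) (xsol i g c) (t (Suc i)) = pev q (PR g) (t (Suc i)) + poly (Ls i) (t (Suc i)) *\<^sub>R c"
    using pev_split[OF Ls[OF i], of "xsol i g c" "t (Suc i)"] xq
      \<open>(\<lambda>j. xsol i g c j - coeff (Ls i) j *\<^sub>R xsol i g c (Suc q)) = PR g\<close> by simp
  fix s u assume u: "u \<in> Vs"
  define dd where "dd = (\<lambda>j. real (Suc j) *\<^sub>R xsol i g c (Suc j))"
  have kd: "Kop (dd j) = PR g j - yt j" if j: "j \<le> q" for j
  proof -
    have "Kop (dd j) = real (Suc j) *\<^sub>R Kop (PR g (Suc j)) + (real (Suc j) * coeff (Ls i) (Suc j)) *\<^sub>R Kop c"
      unfolding dd_def xsol_def by (simp add: K_add K_scale scaleR_add_right)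
    moreover have "PR g j - yt j = coeff (pderiv (Ls i)) j *\<^sub>R Kop c + real (Suc j) *\<^sub>R Kop (PR g (Suc j))"
      using pr_rec[OF j, of Kop g] by (simp add: g_def Gc_def)
    ultimately show ?thesis by (simp add: coeff_pderiv)
  qed
  have "inner (pder (Suc q) (xsol i g c) s) u = (\<Sum>j\<le>q. s ^ j * inner (dd j) u)"
    unfolding pder_as_pev dd_def[symmetric] by (rule inner_pev_left)
  also have "\<dots> = (\<Sum>j\<le>q. s ^ j * a (Kop (dd j)) u)" using u by (simp add: K_eq)
  also have "\<dots> = (\<Sum>j\<le>q. s ^ j * a (PR g j - yt j) u)" using kd by simp
  also have "\<dots> = a (pev q (\<lambda>j. PR g j - yt j) s) u"
    using u PR_in[OF gV] yt by (subst a_pev1) auto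
  also have "pev q (\<lambda>j. PR g j - yt j) s = pev q (PR g) s - pev q yt s" by (simp add: pev_diff)
  finally show "inner (pder (Suc q) (xsol i g c) s) u
            = a (proj_poly q (t i) (t (Suc i)) (pev (Suc q) (xsol i g c)) s - pev q yt s) u"
    unfolding PE' .
qed

end

context gflt begin

lemma Gc_in: "c \<in> Vs \<Longrightarrow> Gc i c j \<in> Vs" by (simp add: Gc_def)

lemma Gc_add: "Gc i (c1 + c2) = (\<lambda>j. Gc i c1 j + Gc i c2 j)"
  by (simp add: Gc_def K_add scaleR_add_right)
lemma Gc_scale: "Gc i (r *\<^sub>R c) = (\<lambda>j. r *\<^sub>R Gc i c j)"
  by (simp add: Gc_def K_scale mult.commute)
lemma Gc_K: "Gc i (Kop v) = (\<lambda>j. Kop (Gc i v j))"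
  by (simp add: Gc_def K_scale)

lemma Eop_in: "c \<in> Vs \<Longrightarrow> Eop i c \<in> Vs"
  unfolding Eop_def by (intro Vadd Vscale pev_in PR_in Gc_in)

lemma Eop_add: "Eop i (c1 + c2) = Eop i c1 + Eop i c2"
  unfolding Eop_def Gc_add PR_add pev_add by (simp add: scaleR_add_right)

lemma Eop_scale: "Eop i (r *\<^sub>R c) = r *\<^sub>R Eop i c"
proof -
  have "PR (Gc i (r *\<^sub>R c)) = (\<lambda>m. r *\<^sub>R PR (Gc i c) m)"
    unfolding Gc_scale prr_at_def by (simp add: prr_scale)
  then show ?thesis unfolding Eop_def by (simp add: pev_def scaleR_sum_right scaleR_add_right mult.commute)
qed

lemma Eop_zero: "Eop i 0 = 0" using Eop_scale[of i 0 0] by simp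

lemma prr_sym: "c \<in> Vs \<Longrightarrow> v \<in> Vs \<Longrightarrow> a (prr Kop q (Gc i c) k) v = a c (prr Kop q (Gc i v) k)"
proof (induction k arbitrary: c v)
  case 0 then show ?case by simp
next
  case (Suc k)
  have pc: "prr Kop q (Gc i c) k \<in> Vs" using Suc.prems by (intro prr_in Gc_in) auto
  have pv: "prr Kop q (Gc i v) k \<in> Vs" using Suc.prems by (intro prr_in Gc_in) auto
  have Kv: "Kop v \<in> Vs" by simp
  have "a (prr Kop q (Gc i c) (Suc k)) v
      = coeff (pderiv (Ls i)) (q - k) * a (Kop c) v + real (Suc (q - k)) * a (Kop (prr Kop q (Gc i c) k)) v"
    using Suc.prems pc by (simp add: Gc_def)
  also have "a (Kop c) v = a c (Kop v)" using Suc.prems by (simp add: K_sym)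
  also have "a (Kop (prr Kop q (Gc i c) k)) v = a (prr Kop q (Gc i c) k) (Kop v)" using Suc.prems pc by (simp add: K_sym)
  also have "\<dots> = a c (prr Kop q (Gc i (Kop v)) k)" using Suc.IH[OF Suc.prems(1) Kv] .
  also have "prr Kop q (Gc i (Kop v)) k = Kop (prr Kop q (Gc i v) k)" unfolding Gc_K by (rule prr_K)
  finally show ?case using Suc.prems pv by (simp add: Gc_def)
qed

lemma PR_sym: "c \<in> Vs \<Longrightarrow> v \<in> Vs \<Longrightarrow> a (PR (Gc i c) m) v = a c (PR (Gc i v) m)"
  unfolding prr_at_def by (rule prr_sym)

lemma Eop_sym: assumes c: "c \<in> Vs" and v: "v \<in> Vs" shows "a (Eop i c) v = a c (Eop i v)"
proof -
  have PRc: "\<And>m. PR (Gc i c) m \<in> Vs" using c by (intro PR_in Gc_in)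
  have PRv: "\<And>m. PR (Gc i v) m \<in> Vs" using v by (intro PR_in Gc_in)
  have "a (Eop i c) v = (\<Sum>m\<le>q. t (Suc i) ^ m * a (PR (Gc i c) m) v) + poly (Ls i) (t (Suc i)) * a c v"
    unfolding Eop_def using c v PRc by (simp add: a_pev1 pev_in)
  also have "\<dots> = (\<Sum>m\<le>q. t (Suc i) ^ m * a c (PR (Gc i v) m)) + poly (Ls i) (t (Suc i)) * a c v"
    using PR_sym[OF c v] by simp
  also have "\<dots> = a c (Eop i v)"
    unfolding Eop_def using c v PRv by (simp add: a_pev2 pev_in)
  finally show ?thesis .
qed

lemma Eop_inj: assumes i: "i < N" and c: "c \<in> Vs" and E0: "Eop i c = 0" shows "c = 0"
proof -
  define y0 where "y0 = (\<lambda>j::nat. c - c)"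
  have y00: "y0 j = 0" for j by (simp add: y0_def)
  define g where "g = (\<lambda>j. y0 j + Gc i c j)"
  define x where "x = xsol i g c"
  have yt: "\<And>j. j \<le> q \<Longrightarrow> y0 j \<in> Vs" by (simp add: y00)
  note XP = xsol_props[where i=i and yt=y0 and c=c, OF i yt c, folded g_def x_def]
  have gG: "g = Gc i c" by (simp add: g_def y00)
  have Xhi: "pev (Suc q) x (t (Suc i)) = 0"
    using XP(5) E0 unfolding gG Eop_def by simp
  note L2 = interval_lower(2)[where y=y0 and yt=y0 and x=x, OF tinc[OF i] Ls[OF i] XP(1) yt yt XP(4)]
  have p0: "pev q y0 s = 0" for s by (simp add: pev_def y00)
  have PV: "\<And>m. PR g m \<in> Vs" unfolding gG using c by (intro PR_in Gc_in)
  define f where "f = (\<lambda>s. (Hm1norm Vs a (pder (Suc q) x s))^2 + a (pev q (PR g) s) (pev q (PR g) s))"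
  have fnn: "f s \<ge> 0" for s unfolding f_def using PV by (intro add_nonneg_nonneg a_pev_pos) auto
  have fc: "continuous_on {t i..t (Suc i)} f" unfolding f_def using PV by (intro continuous_intros) auto
  have "integral {t i..t (Suc i)} f \<le> - ((norm (pev (Suc q) x (t i)))^2)"
  proof -
    have PE: "proj_poly q (t i) (t (Suc i)) (pev (Suc q) x) = pev q (PR g)"
      using XP(3) by (simp add: x_def)
    show ?thesis using L2 unfolding PE Xhi p0 f_def by (simp add: y00)
  qed
  moreover have "integral {t i..t (Suc i)} f \<ge> 0"
    using fnn fc by (intro Henstock_Kurzweil_Integration.integral_nonneg integrable_continuous_interval) auto
  ultimately have "integral {t i..t (Suc i)} f = 0" by (smt (verit) zero_le_power2)
  then have "\<forall>s\<in>{t i..t (Suc i)}. f s = 0" using fc fnn tinc[OF i] by (subst (asm) integral_eq_0_iff) auto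
  then have "\<And>s. s \<in> {t i..t (Suc i)} \<Longrightarrow> pev q (PR g) s = 0"
    using fnn unfolding f_def using PV
    by (metis (no_types, lifting) a_eq0 a_pev_pos add_nonneg_eq_0_iff pev_in zero_le_power2)
  then have "PR g q = 0" using pev_zero_interval[OF tinc[OF i]] by blast
  moreover have "PR g q = g q" using pr_rec[of q q Kop g] pr_top[of Kop q g] by (simp add: K_zero)
  moreover have "g q = real (Suc q) *\<^sub>R Kop c" using cL1[OF i] by (simp add: gG Gc_def coeff_pderiv)
  ultimately have "Kop c = 0" by simp
  then show ?thesis using K_inj[OF c] by simp
qed

lemma E_dense: assumes i: "i < N" and g': "g' \<in> Vs" and e: "e > 0"
  shows "\<exists>c\<in>Vs. a (Eop i c - g') (Eop i c - g') < e"
proof -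
  have "\<exists>p\<in>Vs. (\<forall>r\<in>Eop i ` Vs. a p r = a g' r) \<and> (\<forall>e>0. \<exists>r\<in>Eop i ` Vs. a (r - p) (r - p) < e)"
  proof (rule proj[where l="a g'" and C="a g' g'"])
    show "Eop i ` Vs \<subseteq> Vs" using Eop_in by blast
    show "0 \<in> Eop i ` Vs" using Eop_zero V0 by (metis image_eqI)
    show "\<And>u v. u \<in> Eop i ` Vs \<Longrightarrow> v \<in> Eop i ` Vs \<Longrightarrow> u + v \<in> Eop i ` Vs"
      by (auto simp: Eop_add[symmetric])
    show "\<And>r v. v \<in> Eop i ` Vs \<Longrightarrow> r *\<^sub>R v \<in> Eop i ` Vs"
      by (auto simp: Eop_scale[symmetric])
    show "\<And>u v. u \<in> Vs \<Longrightarrow> v \<in> Vs \<Longrightarrow> a g' (u + v) = a g' u + a g' v" using g' by simp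
    show "\<And>r v. v \<in> Vs \<Longrightarrow> a g' (r *\<^sub>R v) = r * a g' v" using g' by simp
    show "\<And>v. v \<in> Vs \<Longrightarrow> (a g' v)^2 \<le> a g' g' * a v v" using g' by (rule a_CS)
    show "0 \<le> a g' g'" using g' by simp
  qed
  then obtain p where p: "p \<in> Vs" "\<forall>r\<in>Eop i ` Vs. a p r = a g' r"
     "\<forall>e>0. \<exists>r\<in>Eop i ` Vs. a (r - p) (r - p) < e" by blast
  define w where "w = p - g'"
  have wV: "w \<in> Vs" using p g' by (simp add: w_def)
  have EwV: "Eop i w \<in> Vs" using Eop_in[OF wV] .
  have EEw: "Eop i (Eop i w) \<in> Vs" using Eop_in[OF EwV] .
  have "a p (Eop i (Eop i w)) = a g' (Eop i (Eop i w))" using p(2) EwV by blast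
  then have "a w (Eop i (Eop i w)) = 0" using EEw p(1) g' by (simp add: w_def)
  then have "a (Eop i w) (Eop i w) = 0" using Eop_sym[OF wV EwV] by simp
  then have "Eop i w = 0" using a_eq0[OF EwV] by simp
  then have "w = 0" by (rule Eop_inj[OF i wV])
  then have "p = g'" by (simp add: w_def)
  with p(3) e show ?thesis by auto
qed

end

lemma aux_lin1: "2 * \<bar>z\<bar> \<le> A + B \<Longrightarrow> y - A / 2 - B / 2 \<le> y + (z::real)" by arith
lemma aux_lin2: "2 * \<bar>z\<bar> \<le> A + B \<Longrightarrow> y + 2 * z + c \<le> y + A + c + (B::real)" by arith

context gflt begin

lemma interval_solve:
  assumes i: "i < N" and y: "\<And>j. j \<le> q \<Longrightarrow> y j \<in> Vs" and z: "z \<in> Vs" and th: "\<theta> > 0" and eta: "\<eta> > 0"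
  shows "\<exists>x. (\<forall>j\<le>Suc q. x j \<in> Vs) \<and> pev (Suc q) x (t (Suc i)) = z \<and>
    integral {t i..t (Suc i)} (\<lambda>s. inner (pev q y s) (- pder (Suc q) x s) + a (pev q y s) (pev (Suc q) x s))
      \<ge> (1 - \<theta>/2) * integral {t i..t (Suc i)} (\<lambda>s. a (pev q y s) (pev q y s)) - \<eta> \<and>
    integral {t i..t (Suc i)} (\<lambda>s. (Hm1norm Vs a (pder (Suc q) x s))^2
          + a (proj_poly q (t i) (t (Suc i)) (pev (Suc q) x) s) (proj_poly q (t i) (t (Suc i)) (pev (Suc q) x) s))
      \<le> (norm z)^2 - (norm (pev (Suc q) x (t i)))^2
         + (1 + \<theta>) * integral {t i..t (Suc i)} (\<lambda>s. a (pev q y s) (pev q y s)) + \<eta>"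
proof -
  define lo where "lo = t i"
  define hi where "hi = t (Suc i)"
  have lh: "lo < hi" using tinc[OF i] by (simp add: lo_def hi_def)
  define h where "h = hi - lo"
  have hp: "h > 0" using lh by (simp add: h_def)
  have yP: "\<And>m. PR y m \<in> Vs" using y by (rule PR_in)
  define F0 where "F0 = pev q (PR y) hi"
  have F0V: "F0 \<in> Vs" unfolding F0_def using yP by (intro pev_in)
  define g' where "g' = z - F0"
  have g'V: "g' \<in> Vs" using z F0V by (simp add: g'_def)
  define \<kappa> where "\<kappa> = h * (1 + 1 / \<theta>)"
  have kp: "\<kappa> > 0" using hp th by (simp add: \<kappa>_def add_pos_pos)
  define \<delta> where "\<delta> = \<eta> / \<kappa>"
  have dp: "\<delta> > 0" using eta kp by (simp add: \<delta>_def)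
  obtain c where c: "c \<in> Vs" "a (Eop i c - g') (Eop i c - g') < \<delta>" using E_dense[OF i g'V dp] by blast
  define d where "d = g' - Eop i c"
  have dV: "d \<in> Vs" using g'V Eop_in[OF c(1)] by (simp add: d_def)
  have dd: "a d d < \<delta>"
  proof -
    have "d = (-1) *\<^sub>R (Eop i c - g')" by (simp add: d_def)
    then show ?thesis using c g'V Eop_in[OF c(1)] by simp
  qed
  define yt where "yt = (\<lambda>j. y j + (if j = 0 then d else 0))"
  have ytV: "\<And>j. j \<le> q \<Longrightarrow> yt j \<in> Vs" using y dV by (simp add: yt_def)
  define g where "g = (\<lambda>j. yt j + Gc i c j)"
  define x where "x = xsol i g c"
  note XP = xsol_props[where i=i and yt=yt and c=c, OF i ytV c(1), folded g_def x_def]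
  have PE: "proj_poly q (t i) (t (Suc i)) (pev (Suc q) x) = pev q (PR g)"
    using XP(3) by (simp add: x_def)
  have ytp: "pev q yt s = pev q y s + d" for s
    unfolding yt_def pev_add pev_delta0 ..
  have PRg: "PR g m = PR y m + PR (\<lambda>j. if j = 0 then d else 0) m + PR (Gc i c) m" for m
    unfolding g_def yt_def by (simp add: PR_add)
  have pd: "pev q (PR (\<lambda>j. if j = 0 then d else 0)) s = d" for s
  proof -
    have "pev q (PR (\<lambda>j. if j = 0 then d else 0)) s = pev q (\<lambda>j. if j = 0 then d else 0) s"
      unfolding pev_def by (intro sum.cong refl) (simp add: PR_delta0)
    then show ?thesis by (simp add: pev_delta0)
  qed
  have Xhi: "pev (Suc q) x (t (Suc i)) = z"
  proof -
    have "pev (Suc q) x (t (Suc i)) = pev q (PR g) hi + poly (Ls i) hi *\<^sub>R c"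
      using XP(5) by (simp add: x_def hi_def)
    also have "pev q (PR g) hi = F0 + d + pev q (PR (Gc i c)) hi"
      unfolding PRg pev_add pd F0_def ..
    finally show ?thesis by (simp add: Eop_def d_def g'_def hi_def)
  qed
  have weak: "\<And>s u. u \<in> Vs \<Longrightarrow> inner (pder (Suc q) x s) u
      = a (proj_poly q (t i) (t (Suc i)) (pev (Suc q) x) s - pev q yt s) u"
    using XP(4) by (simp add: x_def)
  note IL = interval_lower[where y=y and yt=yt and x=x, OF tinc[OF i] Ls[OF i] XP(1) y ytV weak]
  define YY where "YY = (\<lambda>s. a (pev q y s) (pev q y s))"
  define Yd where "Yd = (\<lambda>s. a (pev q y s) d)"
  have YV: "pev q y s \<in> Vs" for s using y by (rule pev_in)
  have ccY: "continuous_on {lo..hi} YY" unfolding YY_def by (intro continuous_intros y)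
  have ccYd: "continuous_on {lo..hi} Yd"
  proof -
    have "Yd = (\<lambda>s. \<Sum>j\<le>q. s ^ j * a (y j) d)" unfolding Yd_def using y dV by (simp add: a_pev1)
    then show ?thesis by (simp add: continuous_intros)
  qed
  have amg: "2 * \<bar>Yd s\<bar> \<le> \<theta> * YY s + a d d / \<theta>" for s
    unfolding Yd_def YY_def using a_amgm[OF YV dV th] .
  have e1: "a (pev q y s) (pev q yt s) = YY s + Yd s" for s
    unfolding ytp YY_def Yd_def using YV dV by simp
  have e2: "a (pev q yt s) (pev q yt s) = YY s + 2 * Yd s + a d d" for s
    unfolding ytp YY_def Yd_def using YV dV a_sym[OF dV YV] by simp
  have int_const: "integral {lo..hi} (\<lambda>s. k) = h * k" for k
    using lh by (simp add: h_def)
  have B1: "integral {lo..hi} (\<lambda>s. a (pev q y s) (pev q yt s)) \<ge> (1 - \<theta>/2) * integral {lo..hi} YY - h * (a d d / (2 * \<theta>))"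
  proof -
    have "integral {lo..hi} (\<lambda>s. (1 - \<theta>/2) * YY s - a d d / (2 * \<theta>)) \<le> integral {lo..hi} (\<lambda>s. a (pev q y s) (pev q yt s))"
    proof (rule integral_le)
      show "(\<lambda>s. (1 - \<theta>/2) * YY s - a d d / (2 * \<theta>)) integrable_on {lo..hi}"
        using ccY by (intro integrable_continuous_interval continuous_intros)
      show "(\<lambda>s. a (pev q y s) (pev q yt s)) integrable_on {lo..hi}"
        using ccY ccYd unfolding e1 by (intro integrable_continuous_interval continuous_intros)
      fix s
      have r1: "(1 - \<theta>/2) * YY s = YY s - (\<theta> * YY s) / 2" by (simp add: algebra_simps)
      have r2: "a d d / (2 * \<theta>) = (a d d / \<theta>) / 2" by simp
      have "(1 - \<theta>/2) * YY s - a d d / (2 * \<theta>) \<le> YY s + Yd s"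
        unfolding r1 r2 using aux_lin1[OF amg[of s]] by simp
      then show "(1 - \<theta>/2) * YY s - a d d / (2 * \<theta>) \<le> a (pev q y s) (pev q yt s)" using e1 by simp
    qed
    moreover have "integral {lo..hi} (\<lambda>s. (1 - \<theta>/2) * YY s - a d d / (2 * \<theta>))
        = (1 - \<theta>/2) * integral {lo..hi} YY - h * (a d d / (2 * \<theta>))"
      using ccY int_const
      by (subst integral_diff) (auto intro!: integrable_continuous_interval continuous_intros
          simp: Henstock_Kurzweil_Integration.integral_mult_right)
    ultimately show ?thesis by simp
  qed
  have B2: "integral {lo..hi} (\<lambda>s. a (pev q yt s) (pev q yt s)) \<le> (1 + \<theta>) * integral {lo..hi} YY + h * ((1 + 1/\<theta>) * a d d)"
  proof -
    have "integral {lo..hi} (\<lambda>s. a (pev q yt s) (pev q yt s)) \<le> integral {lo..hi} (\<lambda>s. (1 + \<theta>) * YY s + (1 + 1/\<theta>) * a d d)"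
    proof (rule integral_le)
      show "(\<lambda>s. (1 + \<theta>) * YY s + (1 + 1/\<theta>) * a d d) integrable_on {lo..hi}"
        using ccY by (intro integrable_continuous_interval continuous_intros)
      show "(\<lambda>s. a (pev q yt s) (pev q yt s)) integrable_on {lo..hi}"
        using ccY ccYd unfolding e2 by (intro integrable_continuous_interval continuous_intros)
      fix s
      have r1: "(1 + \<theta>) * YY s + (1 + 1/\<theta>) * a d d = YY s + \<theta> * YY s + a d d + a d d / \<theta>"
        by (simp add: algebra_simps)
      have "YY s + 2 * Yd s + a d d \<le> (1 + \<theta>) * YY s + (1 + 1/\<theta>) * a d d"
        unfolding r1 using aux_lin2[OF amg[of s]] by simp
      then show "a (pev q yt s) (pev q yt s) \<le> (1 + \<theta>) * YY s + (1 + 1/\<theta>) * a d d" using e2 by simp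
    qed
    moreover have "integral {lo..hi} (\<lambda>s. (1 + \<theta>) * YY s + (1 + 1/\<theta>) * a d d)
        = (1 + \<theta>) * integral {lo..hi} YY + h * ((1 + 1/\<theta>) * a d d)"
      using ccY int_const
      by (subst integral_add) (auto intro!: integrable_continuous_interval continuous_intros
          simp: Henstock_Kurzweil_Integration.integral_mult_right)
    ultimately show ?thesis by simp
  qed
  have dd0: "a d d \<ge> 0" using dV by simp
  have s1: "h * ((1 + 1/\<theta>) * a d d) \<le> \<eta>"
  proof -
    have "h * ((1 + 1/\<theta>) * a d d) = \<kappa> * a d d" by (simp add: \<kappa>_def)
    also have "\<dots> \<le> \<kappa> * \<delta>" using dd kp by simp
    also have "\<dots> = \<eta>" using kp by (simp add: \<delta>_def)
    finally show ?thesis .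
  qed
  have s2: "h * (a d d / (2 * \<theta>)) \<le> h * ((1 + 1/\<theta>) * a d d)"
  proof -
    have "a d d / (2 * \<theta>) \<le> (1 + 1/\<theta>) * a d d"
      using dd0 th by (simp add: field_simps)
    then show ?thesis using hp by (metis mult_left_mono less_imp_le times_divide_eq_right)
  qed
  show ?thesis
  proof (intro exI[of _ x] conjI)
    show "\<forall>j\<le>Suc q. x j \<in> Vs" using XP(1) by (simp add: x_def)
    show "pev (Suc q) x (t (Suc i)) = z" by (rule Xhi)
    show "integral {t i..t (Suc i)} (\<lambda>s. inner (pev q y s) (- pder (Suc q) x s) + a (pev q y s) (pev (Suc q) x s))
      \<ge> (1 - \<theta>/2) * integral {t i..t (Suc i)} (\<lambda>s. a (pev q y s) (pev q y s)) - \<eta>"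
      using IL(1) B1 s1 s2 unfolding lo_def hi_def YY_def by simp
    show "integral {t i..t (Suc i)} (\<lambda>s. (Hm1norm Vs a (pder (Suc q) x s))^2
          + a (proj_poly q (t i) (t (Suc i)) (pev (Suc q) x) s) (proj_poly q (t i) (t (Suc i)) (pev (Suc q) x) s))
      \<le> (norm z)^2 - (norm (pev (Suc q) x (t i)))^2
         + (1 + \<theta>) * integral {t i..t (Suc i)} (\<lambda>s. a (pev q y s) (pev q y s)) + \<eta>"
      using IL(2) B2 s1 Xhi unfolding lo_def hi_def YY_def by simp
  qed
qed

end

context gflt begin

definition "BIf y x i = integral {t i..t (Suc i)} (\<lambda>s. inner (pev q (y i) s) (- pder (Suc q) (x i) s) + a (pev q (y i) s) (pev (Suc q) (x i) s))"
definition "YIf y i = integral {t i..t (Suc i)} (\<lambda>s. a (pev q (y i) s) (pev q (y i) s))"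
definition "XIf x i = integral {t i..t (Suc i)} (\<lambda>s. (Hm1norm Vs a (pder (Suc q) (x i) s))^2
          + a (proj_poly q (t i) (t (Suc i)) (pev (Suc q) (x i)) s) (proj_poly q (t i) (t (Suc i)) (pev (Suc q) (x i)) s))"

lemma claim_k:
  assumes y: "\<forall>i<N. \<forall>j\<le>q. y i j \<in> Vs" and z: "z \<in> Vs" and th: "\<theta> > 0" and eta: "(\<eta>::real) > 0"
  shows "k \<le> N \<Longrightarrow> \<exists>x w. w \<in> Vs \<and> (\<forall>i. N - k \<le> i \<longrightarrow> i < N \<longrightarrow> (\<forall>j\<le>Suc q. x i j \<in> Vs))
     \<and> (\<forall>i. N - k \<le> i \<longrightarrow> Suc i < N \<longrightarrow> pev (Suc q) (x i) (t (Suc i)) = pev (Suc q) (x (Suc i)) (t (Suc i)))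
     \<and> (0 < k \<longrightarrow> pev (Suc q) (x (N - 1)) (t N) = z \<and> w = pev (Suc q) (x (N - k)) (t (N - k)))
     \<and> (k = 0 \<longrightarrow> w = z)
     \<and> (\<Sum>i\<in>{N-k..<N}. BIf y x i) \<ge> (1 - \<theta>/2) * (\<Sum>i\<in>{N-k..<N}. YIf y i) - real k * \<eta>
     \<and> (\<Sum>i\<in>{N-k..<N}. XIf x i) \<le> (norm z)^2 - (norm w)^2 + (1 + \<theta>) * (\<Sum>i\<in>{N-k..<N}. YIf y i) + real k * \<eta>"
proof (induction k)
  case 0
  show ?case by (intro exI[of _ "\<lambda>i j. 0"] exI[of _ z]) (simp add: z)
next
  case (Suc k)
  then have kN: "k < N" by simp
  obtain x w where IH: "w \<in> Vs" "\<forall>i. N - k \<le> i \<longrightarrow> i < N \<longrightarrow> (\<forall>j\<le>Suc q. x i j \<in> Vs)"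
     "\<forall>i. N - k \<le> i \<longrightarrow> Suc i < N \<longrightarrow> pev (Suc q) (x i) (t (Suc i)) = pev (Suc q) (x (Suc i)) (t (Suc i))"
     "0 < k \<longrightarrow> pev (Suc q) (x (N - 1)) (t N) = z \<and> w = pev (Suc q) (x (N - k)) (t (N - k))"
     "k = 0 \<longrightarrow> w = z"
     "(\<Sum>i\<in>{N-k..<N}. BIf y x i) \<ge> (1 - \<theta>/2) * (\<Sum>i\<in>{N-k..<N}. YIf y i) - real k * \<eta>"
     "(\<Sum>i\<in>{N-k..<N}. XIf x i) \<le> (norm z)^2 - (norm w)^2 + (1 + \<theta>) * (\<Sum>i\<in>{N-k..<N}. YIf y i) + real k * \<eta>"
    using Suc.IH kN by auto
  define i where "i = N - Suc k"
  have iN: "i < N" and Si: "Suc i = N - k" using kN by (auto simp: i_def)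
  have yi: "\<And>j. j \<le> q \<Longrightarrow> y i j \<in> Vs" using y iN by simp
  obtain xi where xi: "\<forall>j\<le>Suc q. xi j \<in> Vs" "pev (Suc q) xi (t (Suc i)) = w"
    "integral {t i..t (Suc i)} (\<lambda>s. inner (pev q (y i) s) (- pder (Suc q) xi s) + a (pev q (y i) s) (pev (Suc q) xi s))
      \<ge> (1 - \<theta>/2) * integral {t i..t (Suc i)} (\<lambda>s. a (pev q (y i) s) (pev q (y i) s)) - \<eta>"
    "integral {t i..t (Suc i)} (\<lambda>s. (Hm1norm Vs a (pder (Suc q) xi s))^2
          + a (proj_poly q (t i) (t (Suc i)) (pev (Suc q) xi) s) (proj_poly q (t i) (t (Suc i)) (pev (Suc q) xi) s))
      \<le> (norm w)^2 - (norm (pev (Suc q) xi (t i)))^2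
         + (1 + \<theta>) * integral {t i..t (Suc i)} (\<lambda>s. a (pev q (y i) s) (pev q (y i) s)) + \<eta>"
    using interval_solve[where y="y i" and i=i and z=w and \<theta>=\<theta> and \<eta>=\<eta>] iN yi IH(1) th eta by blast
  define x' where "x' = x(i := xi)"
  define w' where "w' = pev (Suc q) xi (t i)"
  have x'i: "x' i = xi" by (simp add: x'_def)
  have x'o: "x' i' = x i'" if "i' \<noteq> i" for i' using that by (simp add: x'_def)
  have w'V: "w' \<in> Vs" unfolding w'_def using xi(1) by (intro pev_in) auto
  have BI_i: "BIf y x' i \<ge> (1 - \<theta>/2) * YIf y i - \<eta>" using xi(3) by (simp add: BIf_def YIf_def x'i)
  have XI_i: "XIf x' i \<le> (norm w)^2 - (norm w')^2 + (1 + \<theta>) * YIf y i + \<eta>"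
    using xi(4) by (simp add: XIf_def YIf_def x'i w'_def)
  have setI: "{N - Suc k..<N} = insert i {N-k..<N}" using iN Si by (auto simp: i_def)
  have nin: "i \<notin> {N-k..<N}" using Si by auto
  have BIo: "(\<Sum>i'\<in>{N-k..<N}. BIf y x' i') = (\<Sum>i'\<in>{N-k..<N}. BIf y x i')"
    using Si by (intro sum.cong refl) (simp add: BIf_def x'o)
  have XIo: "(\<Sum>i'\<in>{N-k..<N}. XIf x' i') = (\<Sum>i'\<in>{N-k..<N}. XIf x i')"
    using Si by (intro sum.cong refl) (simp add: XIf_def x'o)
  show ?case
  proof (intro exI[of _ x'] exI[of _ w'] conjI allI impI)
    show "w' \<in> Vs" by (rule w'V)
    fix i' j assume "N - Suc k \<le> i'" "i' < N" and j: "j \<le> Suc q"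
    then have ii: "i \<le> i'" "i' < N" by (auto simp: i_def)
    show "x' i' j \<in> Vs"
    proof (cases "i' = i")
      case True then show ?thesis using xi(1) x'i j by simp
    next
      case False then have "N - k \<le> i'" using ii Si by simp
      then show ?thesis using IH(2) ii(2) x'o[OF False] j by simp
    qed
  next
    fix i' assume a1: "N - Suc k \<le> i'" and a2: "Suc i' < N"
    show "pev (Suc q) (x' i') (t (Suc i')) = pev (Suc q) (x' (Suc i')) (t (Suc i'))"
    proof (cases "i' = i")
      case True
      then have "0 < k" using a2 Si by simp
      then have "w = pev (Suc q) (x (Suc i)) (t (Suc i))" using IH(4) Si by simp
      then show ?thesis using True xi(2) x'i x'o[of "Suc i"] by simp
    next
      case False
      then have "N - k \<le> i'" using a1 Si i_def by simp
      moreover have "Suc i' \<noteq> i" using \<open>N - k \<le> i'\<close> Si by simp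
      ultimately show ?thesis using IH(3) a2 False x'o[of i'] x'o[of "Suc i'"] by simp
    qed
  next
    show "pev (Suc q) (x' (N - 1)) (t N) = z"
    proof (cases "k = 0")
      case True
      then have "N - 1 = i" "Suc i = N" using iN by (auto simp: i_def)
      then show ?thesis using xi(2) IH(5) True x'i by simp
    next
      case False
      then have "N - 1 \<noteq> i" using kN by (simp add: i_def)
      then show ?thesis using IH(4) False x'o by simp
    qed
  next
    show "w' = pev (Suc q) (x' (N - Suc k)) (t (N - Suc k))"
      by (simp add: w'_def x'i i_def[symmetric])
  next
    assume "Suc k = 0" then show "w' = z" by simp
  next
    have "(\<Sum>i'\<in>{N - Suc k..<N}. BIf y x' i') = BIf y x' i + (\<Sum>i'\<in>{N-k..<N}. BIf y x i')"
      unfolding setI using nin BIo by simp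
    moreover have "(\<Sum>i'\<in>{N - Suc k..<N}. YIf y i') = YIf y i + (\<Sum>i'\<in>{N-k..<N}. YIf y i')"
      unfolding setI using nin by simp
    ultimately show "(1 - \<theta>/2) * (\<Sum>i'\<in>{N - Suc k..<N}. YIf y i') - real (Suc k) * \<eta> \<le> (\<Sum>i'\<in>{N - Suc k..<N}. BIf y x' i')"
      using BI_i IH(6) by (simp add: algebra_simps)
  next
    have "(\<Sum>i'\<in>{N - Suc k..<N}. XIf x' i') = XIf x' i + (\<Sum>i'\<in>{N-k..<N}. XIf x i')"
      unfolding setI using nin XIo by simp
    moreover have "(\<Sum>i'\<in>{N - Suc k..<N}. YIf y i') = YIf y i + (\<Sum>i'\<in>{N-k..<N}. YIf y i')"
      unfolding setI using nin by simp
    ultimately show "(\<Sum>i'\<in>{N - Suc k..<N}. XIf x' i') \<le> (norm z)^2 - (norm w')^2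
        + (1 + \<theta>) * (\<Sum>i'\<in>{N - Suc k..<N}. YIf y i') + real (Suc k) * \<eta>"
      using XI_i IH(7) by (simp add: algebra_simps)
  qed
qed

lemma global_construct:
  assumes y: "\<forall>i<N. \<forall>j\<le>q. y i j \<in> Vs" and z: "z \<in> Vs" and th: "\<theta> > 0" and eta: "(\<eta>::real) > 0"
  shows "\<exists>x. x \<in> Xcoef Vs N t q \<and> pev (Suc q) (x (N - 1)) (t N) = z \<and>
     (\<Sum>i<N. BIf y x i) \<ge> (1 - \<theta>/2) * (\<Sum>i<N. YIf y i) - real N * \<eta> \<and>
     (\<Sum>i<N. XIf x i) \<le> (norm z)^2 - (norm (pev (Suc q) (x 0) (t 0)))^2 + (1 + \<theta>) * (\<Sum>i<N. YIf y i) + real N * \<eta>"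
proof -
  obtain x w where C: "w \<in> Vs" "\<forall>i. N - N \<le> i \<longrightarrow> i < N \<longrightarrow> (\<forall>j\<le>Suc q. x i j \<in> Vs)"
     "\<forall>i. N - N \<le> i \<longrightarrow> Suc i < N \<longrightarrow> pev (Suc q) (x i) (t (Suc i)) = pev (Suc q) (x (Suc i)) (t (Suc i))"
     "0 < N \<longrightarrow> pev (Suc q) (x (N - 1)) (t N) = z \<and> w = pev (Suc q) (x (N - N)) (t (N - N))"
     "(\<Sum>i\<in>{N-N..<N}. BIf y x i) \<ge> (1 - \<theta>/2) * (\<Sum>i\<in>{N-N..<N}. YIf y i) - real N * \<eta>"
     "(\<Sum>i\<in>{N-N..<N}. XIf x i) \<le> (norm z)^2 - (norm w)^2 + (1 + \<theta>) * (\<Sum>i\<in>{N-N..<N}. YIf y i) + real N * \<eta>"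
    using claim_k[OF y z th eta, of N] by blast
  have N0: "0 < N" using N1 by simp
  have e: "{N-N..<N} = {..<N}" by auto
  have "x \<in> Xcoef Vs N t q" unfolding Xcoef_def using C(2) C(3) by simp
  then show ?thesis using C(4-6) N0 unfolding e by auto
qed

end

lemma vec_amgm:
  fixes u e :: "'h::real_inner"
  assumes th: "\<theta> > 0"
  shows "2 * \<bar>inner u e\<bar> \<le> \<theta> * (norm u)^2 + (norm e)^2 / \<theta>"
proof -
  have h: "2 * s * inner u e \<le> \<theta> * (norm u)^2 + (norm e)^2 / \<theta>" if s: "s \<in> {-1, 1::real}" for s
  proof -
    have "0 \<le> inner (\<theta> *\<^sub>R u - s *\<^sub>R e) (\<theta> *\<^sub>R u - s *\<^sub>R e)" by simp
    also have "\<dots> = \<theta>^2 * inner u u - 2 * \<theta> * s * inner u e + s^2 * inner e e"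
      by (simp add: inner_diff_left inner_diff_right inner_commute[of e u] power2_eq_square algebra_simps)
    finally have pr: "2 * \<theta> * s * inner u e \<le> \<theta>^2 * (norm u)^2 + (norm e)^2"
      using s by (auto simp: power2_norm_eq_inner)
    have e1: "\<theta> * (\<theta> * (norm u)^2 + (norm e)^2 / \<theta>) = \<theta>^2 * (norm u)^2 + (norm e)^2"
      using th by (simp add: field_simps power2_eq_square)
    have e2: "\<theta> * (2 * s * inner u e) = 2 * \<theta> * s * inner u e" by simp
    have "\<theta> * (2 * s * inner u e) \<le> \<theta> * (\<theta> * (norm u)^2 + (norm e)^2 / \<theta>)"
      using pr e1 e2 by linarith
    then show ?thesis using th by simp
  qed
  show ?thesis using h[of 1] h[of "-1"] by (cases "inner u e \<ge> 0") auto
qed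

context gflt begin

lemma Bstar_dec: "Bstar a N t q Y x = (\<Sum>i<N. BIf (fst Y) x i) + inner (snd Y) (pev (Suc q) (x (N - 1)) (t N))"
  unfolding Bstar_def BIf_def q1 ..

lemma Ynorm_dec: "Ynorm_sq a N t q Y = (norm (snd Y))^2 + (\<Sum>i<N. YIf (fst Y) i)"
  unfolding Ynorm_sq_def YIf_def ..

lemma Xnorm_dec: "Xnorm_sq Vs a N t q x = (norm (pev (Suc q) (x 0) (t 0)))^2 + (\<Sum>i<N. XIf x i)"
  unfolding Xnorm_sq_def XIf_def q1 ..

lemma YIf_nn: "i < N \<Longrightarrow> fst Y \<in> Ycoef Vs N q \<Longrightarrow> YIf (fst Y) i \<ge> 0"
  unfolding YIf_def Ycoef_def
  by (intro Henstock_Kurzweil_Integration.integral_nonneg integrable_continuous_interval continuous_intros)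
     (auto intro!: a_pev_pos)

lemma YIf_pos: assumes i: "i < N" and Y: "fst Y \<in> Ycoef Vs N q" and j: "j \<le> q" and nz: "fst Y i j \<noteq> 0"
  shows "YIf (fst Y) i > 0"
proof -
  have y: "\<And>j. j \<le> q \<Longrightarrow> fst Y i j \<in> Vs" using Y i by (simp add: Ycoef_def)
  have c: "continuous_on {t i..t (Suc i)} (\<lambda>s. a (pev q (fst Y i) s) (pev q (fst Y i) s))"
    by (intro continuous_intros y)
  have "YIf (fst Y) i \<noteq> 0"
  proof
    assume "YIf (fst Y) i = 0"
    then have "\<forall>s\<in>{t i..t (Suc i)}. a (pev q (fst Y i) s) (pev q (fst Y i) s) = 0"
      unfolding YIf_def using c tinc[OF i] y by (subst (asm) integral_eq_0_iff) (auto intro!: a_pev_pos)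
    then have "\<And>s. s \<in> {t i..t (Suc i)} \<Longrightarrow> pev q (fst Y i) s = 0"
      using a_eq0 pev_in y by blast
    then have "fst Y i j = 0" using pev_zero_interval[OF tinc[OF i] _ j] by blast
    with nz show False by simp
  qed
  with YIf_nn[OF i Y] show ?thesis by simp
qed

lemma nY_pos: assumes Y: "fst Y \<in> Ycoef Vs N q" and nz: "(\<exists>i<N. \<exists>j\<le>q. fst Y i j \<noteq> 0) \<or> snd Y \<noteq> 0"
  shows "Ynorm_sq a N t q Y > 0"
proof -
  have S: "(\<Sum>i<N. YIf (fst Y) i) \<ge> 0" using YIf_nn[OF _ Y] by (intro sum_nonneg) auto
  show ?thesis
  proof (cases "snd Y \<noteq> 0")
    case True then show ?thesis unfolding Ynorm_dec using S by (simp add: add_pos_nonneg)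
  next
    case False
    then obtain i j where ij: "i < N" "j \<le> q" "fst Y i j \<noteq> 0" using nz by blast
    have "YIf (fst Y) i \<le> (\<Sum>i<N. YIf (fst Y) i)"
      using YIf_nn[OF _ Y] ij(1) by (intro member_le_sum) auto
    with YIf_pos[OF ij(1) Y ij(2,3)] have "(\<Sum>i<N. YIf (fst Y) i) > 0" by linarith
    then show ?thesis unfolding Ynorm_dec by (simp add: add_nonneg_pos)
  qed
qed

lemma Bstar_zero: assumes "\<forall>i<N. \<forall>j\<le>q+1. x i j = 0" and Y: "fst Y \<in> Ycoef Vs N q" shows "Bstar a N t q Y x = 0"
proof -
  have z: "pev (Suc q) (x i) s = 0" "pder (Suc q) (x i) s = 0" if "i < N" for i s
    using assms that by (auto simp: pev_def pder_def)
  have N0: "N - 1 < N" using N1 by simp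
  have "BIf (fst Y) x i = 0" if "i < N" for i
  proof -
    have "a (pev q (fst Y i) s) 0 = 0" for s
      using Y that by (intro a_zero2 pev_in) (auto simp: Ycoef_def)
    then show ?thesis unfolding BIf_def using z[OF that] by simp
  qed
  then show ?thesis unfolding Bstar_dec using z[OF N0] by simp
qed

end

lemma aux_half: "2 * \<bar>z\<bar> \<le> C \<Longrightarrow> - z \<le> C / (2::real)" by arith

lemma aux_div: "c > 0 \<Longrightarrow> c * (X / (4 * c)) = X / (4::real)" by (simp add: field_simps)

context gflt begin

lemma dense_V: "\<And>w e. e > 0 \<Longrightarrow> \<exists>z\<in>Vs. (norm (z - w))^2 < e"
proof -
  fix w :: 'a and e :: real assume e: "e > 0"
  have "w \<in> closure Vs" using g_dense by simp
  moreover have "sqrt e > 0" using e by simp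
  ultimately obtain z where z: "z \<in> Vs" "dist z w < sqrt e" unfolding closure_approachable by blast
  have "(norm (z - w))^2 < (sqrt e)^2"
    using z(2) by (intro power_strict_mono) (auto simp: dist_norm)
  then show "\<exists>z\<in>Vs. (norm (z - w))^2 < e" using z(1) e by auto
qed


lemma lower_ratio:
  assumes Y: "fst Y \<in> Ycoef Vs N q" and nz: "(\<exists>i<N. \<exists>j\<le>q. fst Y i j \<noteq> 0) \<or> snd Y \<noteq> 0" and ep: "\<epsilon> > 0"
  shows "\<exists>x. x \<in> Xcoef Vs N t q \<and> (\<exists>i<N. \<exists>j\<le>q+1. x i j \<noteq> 0) \<and>
     Bstar a N t q Y x / (sqrt (Ynorm_sq a N t q Y) * sqrt (Xnorm_sq Vs a N t q x)) \<ge> 1 - \<epsilon>"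
proof -
  define n2 where "n2 = Ynorm_sq a N t q Y"
  have n2p: "n2 > 0" using nY_pos[OF Y nz] by (simp add: n2_def)
  define A where "A = (\<Sum>i<N. YIf (fst Y) i)"
  define Y2 where "Y2 = snd Y"
  have n2e: "n2 = (norm Y2)^2 + A" by (simp add: n2_def Ynorm_dec A_def Y2_def)
  have A0: "A \<ge> 0" unfolding A_def using YIf_nn[OF _ Y] by (intro sum_nonneg) auto
  define \<theta> where "\<theta> = min (1/2) (\<epsilon>/2)"
  have thp: "\<theta> > 0" using ep by (simp add: \<theta>_def)
  have th12: "\<theta> \<le> 1/2" by (simp add: \<theta>_def)
  have the: "2 * \<theta> \<le> \<epsilon>" by (simp add: \<theta>_def)
  have Np: "real N > 0" using N1 by simp
  define \<eta> where "\<eta> = \<theta> * n2 / (4 * real N)"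
  have etap: "\<eta> > 0" using thp n2p Np by (simp add: \<eta>_def)
  have Neta: "real N * \<eta> = \<theta> * n2 / 4" using Np by (simp add: \<eta>_def)
  define \<delta> where "\<delta> = \<theta> * n2 / (4 * (1 + 1/\<theta>))"
  have dp: "\<delta> > 0" using thp n2p by (simp add: \<delta>_def add_pos_pos)
  obtain z where z: "z \<in> Vs" "(norm (z - Y2))^2 < \<delta>" using dense_V[OF dp] by blast
  have y: "\<forall>i<N. \<forall>j\<le>q. fst Y i j \<in> Vs" using Y by (simp add: Ycoef_def)
  obtain x where x: "x \<in> Xcoef Vs N t q" and XT: "pev (Suc q) (x (N - 1)) (t N) = z"
    and SB: "(\<Sum>i<N. BIf (fst Y) x i) \<ge> (1 - \<theta>/2) * A - real N * \<eta>"
    and SX: "(\<Sum>i<N. XIf x i) \<le> (norm z)^2 - (norm (pev (Suc q) (x 0) (t 0)))^2 + (1 + \<theta>) * A + real N * \<eta>"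
    using global_construct[OF y z(1) thp etap] unfolding A_def by blast
  define e where "e = z - Y2"
  define E2 where "E2 = (norm e)^2"
  have E20: "E2 \<ge> 0" by (simp add: E2_def)
  have E2d: "E2 < \<delta>" using z(2) by (simp add: E2_def e_def)
  have k1: "(1 + 1/\<theta>) > 0" using thp by (simp add: add_pos_pos)
  have E2b: "(1 + 1/\<theta>) * E2 \<le> \<theta> * n2 / 4"
  proof -
    have "(1 + 1/\<theta>) * E2 \<le> (1 + 1/\<theta>) * \<delta>" using E2d k1 by simp
    also have "\<dots> = \<theta> * n2 / 4" using k1 unfolding \<delta>_def by (rule aux_div)
    finally show ?thesis .
  qed
  have E2c: "E2 / (2 * \<theta>) \<le> (1 + 1/\<theta>) * E2"
  proof -
    have "1 / (2 * \<theta>) \<le> 1 + 1/\<theta>" using thp by (simp add: field_simps)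
    then have "E2 * (1 / (2 * \<theta>)) \<le> E2 * (1 + 1/\<theta>)" using E20 by (rule mult_left_mono)
    then show ?thesis by (simp add: mult.commute)
  qed
  have am: "2 * \<bar>inner Y2 e\<bar> \<le> \<theta> * (norm Y2)^2 + E2 / \<theta>" unfolding E2_def by (rule vec_amgm[OF thp])
  have zY: "z = Y2 + e" by (simp add: e_def)
  have ip: "inner Y2 z = (norm Y2)^2 + inner Y2 e" unfolding zY by (simp add: inner_add_right power2_norm_eq_inner)
  have nz2: "(norm z)^2 = (norm Y2)^2 + 2 * inner Y2 e + E2"
    unfolding zY E2_def by (simp add: power2_norm_eq_inner inner_add_left inner_add_right inner_commute[of e Y2])
  define B where "B = Bstar a N t q Y x"
  have Bd: "B = (\<Sum>i<N. BIf (fst Y) x i) + inner Y2 z" unfolding B_def Bstar_dec XT Y2_def ..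
  define NY where "NY = (norm Y2)^2"
  define TA where "TA = \<theta> * A"
  define TY where "TY = \<theta> * NY"
  define Fq where "Fq = E2 / \<theta>"
  define G where "G = (1 + 1/\<theta>) * E2"
  define SBI where "SBI = (\<Sum>i<N. BIf (fst Y) x i)"
  define SXI where "SXI = (\<Sum>i<N. XIf x i)"
  define IE where "IE = inner Y2 e"
  have f1: "n2 = NY + A" by (simp add: n2e NY_def)
  have f2: "\<theta> * n2 = TY + TA" by (simp add: f1 TY_def TA_def algebra_simps)
  have f3: "real N * \<eta> = (TY + TA) / 4" using Neta f2 by simp
  have f4: "E2 / (2 * \<theta>) = Fq / 2" by (simp add: Fq_def)
  have f5: "Fq / 2 \<le> G" using E2c f4 by (simp add: G_def)
  have f6: "G \<le> (TY + TA) / 4" using E2b f2 by (simp add: G_def)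
  have f7: "SBI \<ge> A - TA / 2 - (TY + TA) / 4"
  proof -
    have "(1 - \<theta>/2) * A = A - TA / 2" by (simp add: TA_def algebra_simps)
    then show ?thesis using SB f3 unfolding SBI_def by simp
  qed
  have f8: "inner Y2 z = NY + IE" using ip by (simp add: NY_def IE_def)
  have f9: "- IE \<le> (TY + Fq) / 2" using aux_half[OF am] by (simp add: IE_def TY_def NY_def Fq_def)
  have f10: "(1 - \<theta>) * n2 = NY + A - TY - TA" using f1 f2 by (simp add: algebra_simps)
  have Bge: "B \<ge> (1 - \<theta>) * n2"
  proof -
    have "B = SBI + NY + IE" using Bd f8 by (simp add: SBI_def)
    then show ?thesis unfolding f10 using f5 f6 f7 f9 by (simp add: field_simps)
  qed
  define nX where "nX = Xnorm_sq Vs a N t q x"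
  have nXd: "nX = (norm (pev (Suc q) (x 0) (t 0)))^2 + SXI" unfolding nX_def Xnorm_dec SXI_def ..
  have g1: "SXI \<le> (norm z)^2 - (norm (pev (Suc q) (x 0) (t 0)))^2 + (A + TA) + (TY + TA) / 4"
  proof -
    have "(1 + \<theta>) * A = A + TA" by (simp add: TA_def algebra_simps)
    then show ?thesis using SX f3 unfolding SXI_def by simp
  qed
  have g2: "(norm z)^2 = NY + 2 * IE + E2" using nz2 by (simp add: NY_def IE_def)
  have g3: "2 * IE \<le> TY + Fq" using am by (simp add: IE_def TY_def NY_def Fq_def)
  have g4: "G = E2 + Fq" by (simp add: G_def Fq_def algebra_simps)
  have g5: "(1 + \<theta>)^2 * n2 = (NY + A) + 2 * (TY + TA) + \<theta> * (TY + TA)"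
    by (simp add: f1 TY_def TA_def power2_eq_square algebra_simps)
  have g7: "TY + TA > 0" using thp n2p f2 by (metis mult_pos_pos)
  have g6: "\<theta> * (TY + TA) \<ge> 0" using g7 thp by simp
  have nXle: "nX \<le> (1 + \<theta>)^2 * n2"
    unfolding g5 using nXd g1 g2 g3 g4 g6 g7 f6 by (simp add: field_simps; linarith)
  have Bpos: "B > 0"
  proof -
    have "(1 - \<theta>) * n2 > 0" using th12 n2p by simp
    then show ?thesis using Bge by linarith
  qed
  have D: "B \<le> sqrt n2 * sqrt nX" using upper[OF Y x] by (simp add: B_def n2_def nX_def)
  have Dp: "sqrt n2 * sqrt nX > 0" using D Bpos by linarith
  have sq: "sqrt nX \<le> (1 + \<theta>) * sqrt n2"
  proof -
    have "sqrt nX \<le> sqrt ((1 + \<theta>)^2 * n2)" using nXle by (rule real_sqrt_le_mono)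
    also have "\<dots> = (1 + \<theta>) * sqrt n2" using thp by (simp add: real_sqrt_mult)
    finally show ?thesis .
  qed
  have Dle: "sqrt n2 * sqrt nX \<le> (1 + \<theta>) * n2"
  proof -
    have "sqrt n2 * sqrt nX \<le> sqrt n2 * ((1 + \<theta>) * sqrt n2)" using sq n2p by (intro mult_left_mono) auto
    also have "\<dots> = (1 + \<theta>) * n2" using n2p by (simp add: algebra_simps)
    finally show ?thesis .
  qed
  have "B / (sqrt n2 * sqrt nX) \<ge> B / ((1 + \<theta>) * n2)"
    using Bpos Dp Dle by (intro divide_left_mono) auto
  moreover have "B / ((1 + \<theta>) * n2) \<ge> (1 - \<theta>) * n2 / ((1 + \<theta>) * n2)"
    using Bge thp n2p by (intro divide_right_mono) auto
  moreover have "(1 - \<theta>) * n2 / ((1 + \<theta>) * n2) = (1 - \<theta>) / (1 + \<theta>)" using n2p by simp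
  moreover have "(1 - \<theta>) / (1 + \<theta>) \<ge> 1 - 2 * \<theta>"
  proof -
    have "(1 - 2 * \<theta>) * (1 + \<theta>) \<le> 1 - \<theta>" using thp by (simp add: algebra_simps power2_eq_square)
    then show ?thesis using thp by (simp add: field_simps)
  qed
  ultimately have ratio: "B / (sqrt n2 * sqrt nX) \<ge> 1 - \<epsilon>" using the by linarith
  have nzx: "\<exists>i<N. \<exists>j\<le>q+1. x i j \<noteq> 0"
  proof (rule ccontr)
    assume "\<not> (\<exists>i<N. \<exists>j\<le>q+1. x i j \<noteq> 0)"
    then have "B = 0" unfolding B_def using Bstar_zero[OF _ Y] by blast
    with Bpos show False by simp
  qed
  show ?thesis using x nzx ratio unfolding B_def n2_def nX_def by blast
qed

end


theorem theorem5p2: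
  fixes Vs :: "'h::{real_inner,complete_space,second_countable_topology} set"
    and iV a :: "'h \<Rightarrow> 'h \<Rightarrow> real"
    and N q :: nat and t :: "nat \<Rightarrow> real"
  assumes "gelfand_form Vs iV a"
    and "Vs \<noteq> {0}"
    and "N \<ge> 1" and "t 0 = 0" and "\<forall>i<N. t i < t (Suc i)"
  defines "YS \<equiv> {Y. fst Y \<in> Ycoef Vs N q \<and>
                     ((\<exists>i<N. \<exists>j\<le>q. fst Y i j \<noteq> 0) \<or> snd Y \<noteq> 0)}"
    and "XS \<equiv> {x. x \<in> Xcoef Vs N t q \<and> (\<exists>i<N. \<exists>j\<le>q+1. x i j \<noteq> 0)}"
    and "R \<equiv> \<lambda>Y x. ereal (Bstar a N t q Y x /
                   (sqrt (Ynorm_sq a N t q Y) * sqrt (Xnorm_sq Vs a N t q x)))"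
  shows "(SUP Y\<in>YS. SUP x\<in>XS. R Y x) = 1 \<and> (INF Y\<in>YS. SUP x\<in>XS. R Y x) = 1"
proof -
  interpret G: gflt Vs iV a N q t
    by unfold_locales (use assms(1-3,5) in auto)
  have Rle: "R Y x \<le> 1" if Y: "Y \<in> YS" and x: "x \<in> XS" for Y x
  proof -
    have "fst Y \<in> Ycoef Vs N q" using Y by (simp add: YS_def)
    moreover have "x \<in> Xcoef Vs N t q" using x by (simp add: XS_def)
    ultimately show ?thesis unfolding R_def using G.ratio_le1 by simp
  qed
  have Rsup: "(SUP x\<in>XS. R Y x) = 1" if Y: "Y \<in> YS" for Y
  proof (rule antisym)
    show "(SUP x\<in>XS. R Y x) \<le> 1" by (rule SUP_least) (use Rle[OF Y] in auto)
    show "1 \<le> (SUP x\<in>XS. R Y x)"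
    proof (rule ereal_le_epsilon2)
      fix e :: real assume e: "0 < e"
      have Yc: "fst Y \<in> Ycoef Vs N q" and Ynz: "(\<exists>i<N. \<exists>j\<le>q. fst Y i j \<noteq> 0) \<or> snd Y \<noteq> 0"
        using Y by (auto simp: YS_def)
      obtain x where x: "x \<in> Xcoef Vs N t q" "\<exists>i<N. \<exists>j\<le>q+1. x i j \<noteq> 0"
        "Bstar a N t q Y x / (sqrt (Ynorm_sq a N t q Y) * sqrt (Xnorm_sq Vs a N t q x)) \<ge> 1 - e"
        using G.lower_ratio[OF Yc Ynz e] by blast
      have xS: "x \<in> XS" using x(1,2) by (simp add: XS_def)
      have "ereal (1 - e) \<le> R Y x" using x(3) by (simp add: R_def)
      also have "\<dots> \<le> (SUP x\<in>XS. R Y x)" using xS by (rule SUP_upper)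
      finally have "ereal (1 - e) + ereal e \<le> (SUP x\<in>XS. R Y x) + ereal e" by (rule add_right_mono)
      then show "1 \<le> (SUP x\<in>XS. R Y x) + ereal e" by (simp add: one_ereal_def)
    qed
  qed
  obtain v0 where v0: "v0 \<in> Vs" "v0 \<noteq> 0" using assms(2) G.V0 by blast
  have "((\<lambda>i j. 0), v0) \<in> YS" using v0 by (simp add: YS_def Ycoef_def)
  then have ne: "YS \<noteq> {}" by blast
  have "(SUP Y\<in>YS. SUP x\<in>XS. R Y x) = (SUP Y\<in>YS. 1)" by (rule SUP_cong) (simp_all add: Rsup)
  also have "\<dots> = 1" using ne by simp
  finally have s1: "(SUP Y\<in>YS. SUP x\<in>XS. R Y x) = 1" .
  have "(INF Y\<in>YS. SUP x\<in>XS. R Y x) = (INF Y\<in>YS. 1)" by (rule INF_cong) (simp_all add: Rsup)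
  also have "\<dots> = 1" using ne by simp
  finally have s2: "(INF Y\<in>YS. SUP x\<in>XS. R Y x) = 1" .
  show ?thesis using s1 s2 by simp
qed

end
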